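(* Let $E_1 \subseteq H^2$ be a closed subspace and let $E_2 = \Theta_2 H^2$ for an inner function $\Theta_2$. Let $k \in E_1$ be nonzero with inner-outer factorization $k = \theta p$, where $\theta$ is inner and $p$ is outer in $H^2$. Then the minimal generalized Toeplitz kernel containing $k$ is \[ K_{\min}^{E_1,E_2}(k) = \ker T^{E_1,E_2}_{\frac{\Theta_2\,\overline{\theta z p}}{p}} . \]
   Context: $H^2$ is the Hardy space of the unit disk, identified with a closed subspace of $L^2(\mathbb{T})$ via boundary values; $P_+$ is the orthogonal projection of $L^2(\mathbb{T})$ onto $H^2$ and $T_g f = P_+(gf)$. For a symbol $g$ (a measurable function on $\mathbb{T}$), the generalized Toeplitz kernel is $\ker T_g^{E_1,E_2} := \{ f \in E_1 : T_g f \in E_2^\perp\}$, where $E_2^\perp$ is the orthogonal complement of $E_2$ in $L^2(\mathbb{T})$. For nonzero $k\in E_1$, the minimal generalized Toeplitz kernel $K^{E_1,E_2}_{\min}(k)$ is the smallest kernel of the form $\ker T_g^{E_1,E_2}$ containing $k$: i.e. it is such a kernel containing $k$, and for every $g\in L^\infty(\mathbb{T})$ with $k \in \ker T_g^{E_1,E_2}$ one has $K^{E_1,E_2}_{\min}(k) \subseteq \ker T_g^{E_1,E_2}$. Here $z$ denotes the coordinate function on $\mathbb{T}$. *)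

theory Defs
  imports "HOL-Analysis.Analysis" "HOL-Computational_Algebra.Polynomial"
begin

text \<open>Functions on the unit circle T are represented as functions complex => complex;
  only their values on T matter.\<close>

definition circle_measure :: "complex measure" where
  "circle_measure =
     distr (density (restrict_space lborel {0..2*pi}) (\<lambda>_. ennreal (1/(2*pi)))) borel cis"

definition L2T :: "(complex \<Rightarrow> complex) set" where
  "L2T = {f. f \<in> borel_measurable circle_measure \<and>
             integrable circle_measure (\<lambda>z. (cmod (f z))^2)}"

definition LinfT :: "(complex \<Rightarrow> complex) set" where
  "LinfT = {f. f \<in> borel_measurable circle_measure \<and>
               (\<exists>C. AE z in circle_measure. cmod (f z) \<le> C)}"

definition inner2 :: "(complex \<Rightarrow> complex) \<Rightarrow> (complex \<Rightarrow> complex) \<Rightarrow> complex" where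
  "inner2 f g = integral\<^sup>L circle_measure (\<lambda>z. f z * cnj (g z))"

definition norm2 :: "(complex \<Rightarrow> complex) \<Rightarrow> real" where
  "norm2 f = sqrt (integral\<^sup>L circle_measure (\<lambda>z. (cmod (f z))^2))"

definition fourier_coeff :: "(complex \<Rightarrow> complex) \<Rightarrow> int \<Rightarrow> complex" where
  "fourier_coeff f n = integral\<^sup>L circle_measure (\<lambda>z. f z * z powi (- n))"

definition H2 :: "(complex \<Rightarrow> complex) set" where
  "H2 = {f \<in> L2T. \<forall>n::int. n < 0 \<longrightarrow> fourier_coeff f n = 0}"

definition orth :: "(complex \<Rightarrow> complex) set \<Rightarrow> (complex \<Rightarrow> complex) set" where
  "orth E = {f \<in> L2T. \<forall>e\<in>E. inner2 f e = 0}"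

definition closed_subspace_L2 :: "(complex \<Rightarrow> complex) set \<Rightarrow> bool" where
  "closed_subspace_L2 E \<longleftrightarrow> E \<subseteq> L2T \<and> (\<lambda>_. 0) \<in> E \<and>
     (\<forall>f\<in>E. \<forall>g\<in>E. (\<lambda>z. f z + g z) \<in> E) \<and>
     (\<forall>c::complex. \<forall>f\<in>E. (\<lambda>z. c * f z) \<in> E) \<and>
     (\<forall>F f. (\<forall>n::nat. F n \<in> E) \<longrightarrow> f \<in> L2T \<longrightarrow>
        (\<lambda>n. norm2 (\<lambda>z. F n z - f z)) \<longlonglongrightarrow> 0 \<longrightarrow> f \<in> E)"

definition Pplus :: "(complex \<Rightarrow> complex) \<Rightarrow> (complex \<Rightarrow> complex)" where
  "Pplus h = (SOME u. u \<in> H2 \<and> (\<forall>e\<in>H2. inner2 (\<lambda>z. h z - u z) e = 0))"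

definition toeplitz :: "(complex \<Rightarrow> complex) \<Rightarrow> (complex \<Rightarrow> complex) \<Rightarrow> (complex \<Rightarrow> complex)" where
  "toeplitz g f = Pplus (\<lambda>z. g z * f z)"

definition gen_toeplitz_kernel ::
  "(complex \<Rightarrow> complex) \<Rightarrow> (complex \<Rightarrow> complex) set \<Rightarrow> (complex \<Rightarrow> complex) set \<Rightarrow> (complex \<Rightarrow> complex) set" where
  "gen_toeplitz_kernel g E1 E2 = {f \<in> E1. toeplitz g f \<in> orth E2}"

definition is_min_gen_toeplitz_kernel ::
  "(complex \<Rightarrow> complex) set \<Rightarrow> (complex \<Rightarrow> complex) set \<Rightarrow> (complex \<Rightarrow> complex) \<Rightarrow> (complex \<Rightarrow> complex) set \<Rightarrow> bool" where
  "is_min_gen_toeplitz_kernel E1 E2 k K \<longleftrightarrow>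
     (\<exists>g\<in>LinfT. K = gen_toeplitz_kernel g E1 E2) \<and> k \<in> K \<and>
     (\<forall>g\<in>LinfT. k \<in> gen_toeplitz_kernel g E1 E2 \<longrightarrow> K \<subseteq> gen_toeplitz_kernel g E1 E2)"

definition inner_fun :: "(complex \<Rightarrow> complex) \<Rightarrow> bool" where
  "inner_fun \<theta> \<longleftrightarrow> \<theta> \<in> H2 \<and> (AE z in circle_measure. cmod (\<theta> z) = 1)"

text \<open>Outer functions in H^2: cyclic vectors for the shift, i.e. the polynomial multiples
  q p (q an analytic polynomial) are dense in H^2 (Beurling).\<close>
definition outer_fun :: "(complex \<Rightarrow> complex) \<Rightarrow> bool" where
  "outer_fun p \<longleftrightarrow> p \<in> H2 \<and>
     (\<forall>h\<in>H2. \<forall>\<epsilon>>0. \<exists>q::complex poly. norm2 (\<lambda>z. poly q z * p z - h z) < \<epsilon>)"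

definition inner_mult_H2 :: "(complex \<Rightarrow> complex) \<Rightarrow> (complex \<Rightarrow> complex) set" where
  "inner_mult_H2 \<Theta> = {f \<in> L2T. \<exists>h\<in>H2. AE z in circle_measure. f z = \<Theta> z * h z}"

end

theory Submission
  imports Defs
begin

abbreviation "CM \<equiv> circle_measure"

lemma CM_sets[simp, measurable_cong]: "sets CM = sets borel"
  by (simp add: circle_measure_def)

lemma CM_space[simp]: "space CM = UNIV"
  by (simp add: circle_measure_def)

lemma measurable_CM_iff[simp]: "f \<in> borel_measurable CM \<longleftrightarrow> f \<in> borel_measurable borel"
  by (simp add: measurable_def)

definition D0 :: "real measure" where
  "D0 = density (restrict_space lborel {0..2*pi}) (\<lambda>_. ennreal (1/(2*pi)))"

lemma CM_def': "CM = distr D0 borel cis"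
  by (simp add: circle_measure_def D0_def)

lemma cis_borel[measurable]: "cis \<in> borel_measurable borel"
  by (intro borel_measurable_continuous_onI continuous_intros)

lemma sets_D0[measurable_cong, simp]: "sets D0 = sets (restrict_space lborel {0..2*pi})"
  by (simp add: D0_def)

lemma cis_meas[measurable]: "cis \<in> measurable D0 borel"
  unfolding measurable_cong_sets[OF sets_D0 refl] by (intro measurable_restrict_space1) simp

lemma CM_integral:
  fixes f :: "complex \<Rightarrow> 'b::{banach, second_countable_topology}"
  assumes [measurable]: "f \<in> borel_measurable borel"
  shows "integral\<^sup>L CM f = (1/(2*pi)) *\<^sub>R (LINT t:{0..2*pi}|lborel. f (cis t))"
proof -
  have "integral\<^sup>L CM f = integral\<^sup>L D0 (\<lambda>t. f (cis t))"
    unfolding CM_def' by (rule integral_distr) auto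
  also have "\<dots> = integral\<^sup>L (restrict_space lborel {0..2*pi}) (\<lambda>t. (1/(2*pi)) *\<^sub>R f (cis t))"
    unfolding D0_def by (rule integral_density) auto
  also have "\<dots> = (LINT t|lborel. indicator {0..2*pi} t *\<^sub>R ((1/(2*pi)) *\<^sub>R f (cis t)))"
    by (rule integral_restrict_space) auto
  also have "\<dots> = (LINT t|lborel. (1/(2*pi)) *\<^sub>R (indicator {0..2*pi} t *\<^sub>R f (cis t)))"
    by (intro Bochner_Integration.integral_cong) (auto simp: scaleR_left_commute)
  also have "\<dots> = (1/(2*pi)) *\<^sub>R (LINT t:{0..2*pi}|lborel. f (cis t))"
    unfolding set_lebesgue_integral_def by (rule integral_scaleR_right)
  finally show ?thesis .
qed

lemma CM_integrable:
  fixes f :: "complex \<Rightarrow> 'b::{banach, second_countable_topology}"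
  assumes [measurable]: "f \<in> borel_measurable borel"
  shows "integrable CM f \<longleftrightarrow> set_integrable lborel {0..2*pi} (\<lambda>t. f (cis t))"
proof -
  have "integrable CM f \<longleftrightarrow> integrable D0 (\<lambda>t. f (cis t))"
    unfolding CM_def' by (rule integrable_distr_eq) auto
  also have "\<dots> \<longleftrightarrow> integrable (restrict_space lborel {0..2*pi}) (\<lambda>t. (1/(2*pi)) *\<^sub>R f (cis t))"
    unfolding D0_def by (rule integrable_density) auto
  also have "\<dots> \<longleftrightarrow> integrable lborel (\<lambda>t. indicator {0..2*pi} t *\<^sub>R ((1/(2*pi)) *\<^sub>R f (cis t)))"
    by (rule integrable_restrict_space) auto
  also have "\<dots> \<longleftrightarrow> integrable lborel (\<lambda>t. (1/(2*pi)) *\<^sub>R (indicator {0..2*pi} t *\<^sub>R f (cis t)))"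
    by (simp only: scaleR_left_commute[of "indicator {0..2*pi} _ :: real" "1/(2*pi)"])
  also have "\<dots> \<longleftrightarrow> set_integrable lborel {0..2*pi} (\<lambda>t. f (cis t))"
  proof
    assume A: "integrable lborel (\<lambda>t. (1/(2*pi)) *\<^sub>R (indicator {0..2*pi} t *\<^sub>R f (cis t)))"
    have "integrable lborel (\<lambda>t. (2*pi) *\<^sub>R ((1/(2*pi)) *\<^sub>R (indicator {0..2*pi} t *\<^sub>R f (cis t))))"
      by (rule integrable_scaleR_right, rule A)
    then show "set_integrable lborel {0..2*pi} (\<lambda>t. f (cis t))"
      unfolding set_integrable_def by (simp only: scaleR_scaleR) simp
  next
    assume "set_integrable lborel {0..2*pi} (\<lambda>t. f (cis t))"
    then show "integrable lborel (\<lambda>t. (1/(2*pi)) *\<^sub>R (indicator {0..2*pi} t *\<^sub>R f (cis t)))"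
      unfolding set_integrable_def by (rule integrable_scaleR_right)
  qed
  finally show ?thesis .
qed

lemma AE_CM: "AE z in CM. cmod z = 1"
proof -
  have "AE t in D0. cmod (cis t) = 1" by simp
  then show ?thesis unfolding CM_def' by (subst AE_distr_iff) auto
qed

lemma CM_UNIV: "emeasure CM UNIV = 1"
proof -
  have S: "{0..2*pi} \<in> sets (restrict_space lborel {0..2*pi})"
    using sets.top[of "restrict_space lborel {0..2*pi}"] by (simp add: space_restrict_space)
  have "emeasure CM UNIV = emeasure D0 {0..2*pi}"
    unfolding CM_def' by (subst emeasure_distr) (auto simp: space_restrict_space D0_def)
  also have "\<dots> = (\<integral>\<^sup>+ t. ennreal (1/(2*pi)) * indicator {0..2*pi} t \<partial>restrict_space lborel {0..2*pi})"
    unfolding D0_def using S by (subst emeasure_density) (auto simp: space_restrict_space)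
  also have "\<dots> = ennreal (1/(2*pi)) * emeasure (restrict_space lborel {0..2*pi}) {0..2*pi}"
    using S by (subst nn_integral_cmult_indicator) (auto simp: space_restrict_space)
  also have "\<dots> = 1"
    by (subst emeasure_restrict_space) (auto simp: ennreal_mult[symmetric])
  finally show ?thesis .
qed

interpretation CMp: finite_measure CM
  by (rule finite_measureI) (simp add: CM_UNIV)

lemma int_cis_interval:
  fixes n :: int
  shows "(LINT t:{0..2*pi}|lborel. cis (of_int n * t)) = (if n = 0 then complex_of_real (2*pi) else 0)"
proof -
  have ci: "continuous_on {0..2*pi} (\<lambda>t. cis (of_int n * t))"
    by (intro continuous_intros)
  have eq: "(LINT t:{0..2*pi}|lborel. cis (of_int n * t)) = integral {0..2*pi} (\<lambda>t. cis (of_int n * t))"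
    by (rule set_borel_integral_eq_integral(2)[OF borel_integrable_atLeastAtMost'[OF ci]])
  show ?thesis
  proof (cases "n = 0")
    case True
    then show ?thesis unfolding eq by (simp add: scaleR_conv_of_real)
  next
    case False
    define F where "F = (\<lambda>z::complex. exp (\<i> * of_int n * z) / (\<i> * of_int n))"
    have d: "((\<lambda>t. F (of_real t)) has_vector_derivative cis (of_int n * t)) (at t within {0..2*pi})" for t
    proof -
      have "(F has_field_derivative exp (\<i> * of_int n * of_real t)) (at (of_real t))"
        unfolding F_def using False
        by (auto intro!: derivative_eq_intros simp: field_simps)
      then have "((\<lambda>t. F (of_real t)) has_vector_derivative exp (\<i> * of_int n * of_real t)) (at t within {0..2*pi})"
        by (rule has_vector_derivative_real_field)
      moreover have "exp (\<i> * of_int n * of_real t) = cis (of_int n * t)"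
        by (simp add: cis_conv_exp mult.commute mult.left_commute)
      ultimately show ?thesis by simp
    qed
    have "((\<lambda>t. cis (of_int n * t)) has_integral (F (of_real (2*pi)) - F (of_real 0))) {0..2*pi}"
      by (rule fundamental_theorem_of_calculus) (use d in auto)
    moreover have "F (of_real (2*pi)) - F (of_real 0) = 0"
    proof -
      have "exp (\<i> * of_int n * of_real (2*pi)) = cis (2 * pi * of_int n)"
        by (simp add: cis_conv_exp mult.commute mult.left_commute)
      also have "\<dots> = 1" by (simp add: cis_multiple_2pi)
      finally show ?thesis unfolding F_def by simp
    qed
    ultimately show ?thesis unfolding eq using False by (simp add: integral_unique)
  qed
qed

lemma powi_meas[measurable]: "(\<lambda>z::complex. z powi n) \<in> borel_measurable borel"
  unfolding power_int_def by measurable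

lemma CM_powi:
  fixes n :: int
  shows "integral\<^sup>L CM (\<lambda>z. z powi n) = (if n = 0 then 1 else 0)"
proof -
  have "integral\<^sup>L CM (\<lambda>z. z powi n) = (1/(2*pi)) *\<^sub>R (LINT t:{0..2*pi}|lborel. cis t powi n)"
    by (rule CM_integral) measurable
  also have "\<dots> = (1/(2*pi)) *\<^sub>R (LINT t:{0..2*pi}|lborel. cis (of_int n * t))"
    by (simp add: cis_power_int)
  also have "\<dots> = (if n = 0 then 1 else 0)"
    by (simp add: int_cis_interval scaleR_conv_of_real)
  finally show ?thesis .
qed

lemma cnj_borel: "cnj \<in> borel_measurable borel"
  by (intro borel_measurable_continuous_onI continuous_intros)

lemma cnj_meas[measurable (raw)]: "f \<in> borel_measurable M \<Longrightarrow> (\<lambda>x. cnj (f x)) \<in> borel_measurable M"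
  using measurable_compose[OF _ cnj_borel] by blast

lemma int_boundI:
  fixes f :: "'a \<Rightarrow> 'b::{banach, second_countable_topology}"
    and g :: "'a \<Rightarrow> 'c::{banach, second_countable_topology}"
  shows "integrable M f \<Longrightarrow> (AE x in M. norm (g x) \<le> norm (f x)) \<Longrightarrow> g \<in> borel_measurable M \<Longrightarrow> integrable M g"
  using Bochner_Integration.integrable_bound by blast

lemma L2T_iff: "f \<in> L2T \<longleftrightarrow> f \<in> borel_measurable borel \<and> integrable CM (\<lambda>z. (cmod (f z))^2)"
  by (simp add: L2T_def)

lemma L2T_meas[measurable_dest]: "f \<in> L2T \<Longrightarrow> f \<in> borel_measurable borel"
  by (simp add: L2T_iff)

lemma L2T_sq: "f \<in> L2T \<Longrightarrow> integrable CM (\<lambda>z. (cmod (f z))^2)"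
  by (simp add: L2T_iff)

lemma L2T_boundI:
  assumes "f \<in> L2T" "h \<in> borel_measurable borel" "AE z in CM. cmod (h z) \<le> C * cmod (f z)"
  shows "h \<in> L2T"
proof -
  have C: "AE z in CM. 0 \<le> C \<or> h z = 0"
    using assms(3) by eventually_elim (metis mult_nonpos_nonneg norm_ge_zero norm_le_zero_iff order_trans linorder_not_le less_imp_le)
  have "integrable CM (\<lambda>z. C^2 * (cmod (f z))^2)"
    using L2T_sq[OF assms(1)] by simp
  moreover have "AE z in CM. norm ((cmod (h z))^2) \<le> norm (C^2 * (cmod (f z))^2)"
    using assms(3) C
  proof eventually_elim
    case (elim z)
    show ?case
    proof (cases "h z = 0")
      case True then show ?thesis by simp
    next
      case False
      with elim have "0 \<le> C" by auto
      then have "(cmod (h z))^2 \<le> (C * cmod (f z))^2"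
        using elim by (intro power_mono) auto
      then show ?thesis by (simp add: power_mult_distrib)
    qed
  qed
  ultimately have "integrable CM (\<lambda>z. (cmod (h z))^2)"
    by (rule int_boundI) (use assms(2) in simp)
  then show ?thesis using assms(2) by (simp add: L2T_iff)
qed

lemma L2T_boundedI:
  assumes "h \<in> borel_measurable borel" "AE z in CM. cmod (h z) \<le> C"
  shows "h \<in> L2T"
proof -
  have "integrable CM (\<lambda>z. (max C 0)^2)" by simp
  moreover have "AE z in CM. norm ((cmod (h z))^2) \<le> norm ((max C 0)^2)"
    using assms(2) by eventually_elim (auto intro!: power_mono)
  ultimately have "integrable CM (\<lambda>z. (cmod (h z))^2)"
    by (rule int_boundI) (use assms(1) in simp)
  then show ?thesis using assms(1) by (simp add: L2T_iff)
qed

lemma L2T_const[simp, intro]: "(\<lambda>z. c) \<in> L2T"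
  by (rule L2T_boundedI[where C="cmod c"]) auto

lemma L2T_powi[simp, intro]: "(\<lambda>z. z powi n) \<in> L2T"
  by (rule L2T_boundedI[where C=1]) (use AE_CM in \<open>auto simp: norm_power_int\<close>)

lemma L2T_prod_int:
  assumes "f \<in> L2T" "g \<in> L2T"
  shows "integrable CM (\<lambda>z. f z * g z)"
proof -
  have "integrable CM (\<lambda>z. (cmod (f z))^2 + (cmod (g z))^2)"
    using assms by (simp add: L2T_sq)
  moreover have "AE z in CM. norm (f z * g z) \<le> norm ((cmod (f z))^2 + (cmod (g z))^2)"
  proof (rule AE_I2)
    fix z
    have "cmod (f z) * cmod (g z) \<le> (cmod (f z))^2 + (cmod (g z))^2"
      using zero_le_power2[of "cmod (f z) - cmod (g z)"] mult_nonneg_nonneg[OF norm_ge_zero norm_ge_zero, of "f z" "g z"]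
      unfolding power2_diff by (simp add: power2_eq_square; linarith)
    then show "norm (f z * g z) \<le> norm ((cmod (f z))^2 + (cmod (g z))^2)" by (simp add: norm_mult)
  qed
  ultimately show ?thesis
    by (rule int_boundI) (use assms in auto)
qed

lemma L2T_cnj[simp]: "(\<lambda>z. cnj (f z)) \<in> L2T \<longleftrightarrow> f \<in> L2T"
proof -
  have "(\<lambda>z. cnj (f z)) \<in> borel_measurable borel \<longleftrightarrow> f \<in> borel_measurable borel"
  proof
    assume "(\<lambda>z. cnj (f z)) \<in> borel_measurable borel"
    then have "(\<lambda>z. cnj (cnj (f z))) \<in> borel_measurable borel" by (rule cnj_meas)
    then show "f \<in> borel_measurable borel" by simp
  qed measurable
  then show ?thesis by (simp add: L2T_iff)
qed

lemma L2T_inner_int: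
  assumes "f \<in> L2T" "g \<in> L2T"
  shows "integrable CM (\<lambda>z. f z * cnj (g z))"
  using L2T_prod_int[of f "\<lambda>z. cnj (g z)"] assms by simp

lemma L2T_int:
  assumes "f \<in> L2T" shows "integrable CM f"
  using L2T_prod_int[OF assms L2T_const[of 1]] by simp

lemma L2T_add[intro]: "f \<in> L2T \<Longrightarrow> g \<in> L2T \<Longrightarrow> (\<lambda>z. f z + g z) \<in> L2T"
proof -
  assume f: "f \<in> L2T" and g: "g \<in> L2T"
  have "integrable CM (\<lambda>z. 2 * (cmod (f z))^2 + 2 * (cmod (g z))^2)"
    using f g by (simp add: L2T_sq)
  moreover have "AE z in CM. norm ((cmod (f z + g z))^2) \<le> norm (2 * (cmod (f z))^2 + 2 * (cmod (g z))^2)"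
  proof (rule AE_I2)
    fix z
    have "cmod (f z + g z) \<le> cmod (f z) + cmod (g z)" by (rule norm_triangle_ineq)
    then have "(cmod (f z + g z))^2 \<le> (cmod (f z) + cmod (g z))^2"
      by (intro power_mono) auto
    also have "\<dots> \<le> 2 * (cmod (f z))^2 + 2 * (cmod (g z))^2"
      using zero_le_power2[of "cmod (f z) - cmod (g z)"] unfolding power2_diff power2_sum by simp
    finally show "norm ((cmod (f z + g z))^2) \<le> norm (2 * (cmod (f z))^2 + 2 * (cmod (g z))^2)" by simp
  qed
  ultimately have "integrable CM (\<lambda>z. (cmod (f z + g z))^2)"
    by (rule int_boundI) (use f g in auto)
  then show ?thesis using f g by (auto simp: L2T_iff)
qed

lemma L2T_cmult[intro]: "f \<in> L2T \<Longrightarrow> (\<lambda>z. c * f z) \<in> L2T"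
  by (rule L2T_boundI[where C="cmod c"]) (auto simp: norm_mult)

lemma L2T_uminus[intro]: "f \<in> L2T \<Longrightarrow> (\<lambda>z. - f z) \<in> L2T"
  using L2T_cmult[of f "-1"] by simp

lemma L2T_diff[intro]: "f \<in> L2T \<Longrightarrow> g \<in> L2T \<Longrightarrow> (\<lambda>z. f z - g z) \<in> L2T"
  using L2T_add[of f "\<lambda>z. - g z"] by auto

lemma L2T_sum[intro]: "(\<And>i. i \<in> S \<Longrightarrow> F i \<in> L2T) \<Longrightarrow> (\<lambda>z. \<Sum>i\<in>S. F i z) \<in> L2T"
proof (induction S rule: infinite_finite_induct)
  case (insert x F) then show ?case by (simp add: L2T_add)
qed auto

lemma LinfT_mult:
  assumes "g \<in> LinfT" "f \<in> L2T"
  shows "(\<lambda>z. g z * f z) \<in> L2T"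
proof -
  obtain C where C: "AE z in CM. cmod (g z) \<le> C" using assms(1) by (auto simp: LinfT_def)
  have gm: "g \<in> borel_measurable borel" using assms(1) by (auto simp: LinfT_def)
  show ?thesis
    by (rule L2T_boundI[OF assms(2), where C=C]) (use C gm assms(2) in \<open>auto simp: norm_mult intro!: mult_right_mono elim!: eventually_mono\<close>)
qed

lemma norm2_nonneg[simp]: "0 \<le> norm2 f"
  unfolding norm2_def by simp

lemma norm2_sq: "(norm2 f)^2 = integral\<^sup>L CM (\<lambda>z. (cmod (f z))^2)"
  unfolding norm2_def by simp

lemma inner2_self: "inner2 f f = of_real ((norm2 f)^2)"
proof -
  have "\<And>z. f z * cnj (f z) = of_real ((cmod (f z))^2)"
    by (metis complex_norm_square)
  then have "(\<lambda>z. f z * cnj (f z)) = (\<lambda>z. of_real ((cmod (f z))^2))"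
    by (rule ext)
  then show ?thesis unfolding inner2_def norm2_sq by (simp only: integral_complex_of_real)
qed

lemma inner2_sym: "inner2 g f = cnj (inner2 f g)"
proof -
  have "inner2 g f = integral\<^sup>L CM (\<lambda>z. cnj (f z * cnj (g z)))"
    unfolding inner2_def by (rule arg_cong[where f="integral\<^sup>L CM"]) (simp add: fun_eq_iff mult.commute)
  also have "\<dots> = cnj (inner2 f g)" unfolding inner2_def by (rule Bochner_Integration.integral_cnj)
  finally show ?thesis .
qed

lemma inner2_cmult_left: "inner2 (\<lambda>z. c * f z) h = c * inner2 f h"
  unfolding inner2_def by (simp add: mult.assoc)

lemma inner2_cmult_right: "inner2 h (\<lambda>z. c * f z) = cnj c * inner2 h f"
  unfolding inner2_def by (simp add: mult.assoc mult.left_commute)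

lemma inner2_add_left:
  "f \<in> L2T \<Longrightarrow> g \<in> L2T \<Longrightarrow> h \<in> L2T \<Longrightarrow> inner2 (\<lambda>z. f z + g z) h = inner2 f h + inner2 g h"
  unfolding inner2_def by (simp add: distrib_right L2T_inner_int)

lemma inner2_diff_left:
  "f \<in> L2T \<Longrightarrow> g \<in> L2T \<Longrightarrow> h \<in> L2T \<Longrightarrow> inner2 (\<lambda>z. f z - g z) h = inner2 f h - inner2 g h"
  unfolding inner2_def by (simp add: left_diff_distrib L2T_inner_int)

lemma inner2_add_right:
  "f \<in> L2T \<Longrightarrow> g \<in> L2T \<Longrightarrow> h \<in> L2T \<Longrightarrow> inner2 h (\<lambda>z. f z + g z) = inner2 h f + inner2 h g"
  by (subst (1 2 3) inner2_sym) (simp add: inner2_add_left)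

lemma inner2_diff_right:
  "f \<in> L2T \<Longrightarrow> g \<in> L2T \<Longrightarrow> h \<in> L2T \<Longrightarrow> inner2 h (\<lambda>z. f z - g z) = inner2 h f - inner2 h g"
  by (subst (1 2 3) inner2_sym) (simp add: inner2_diff_left)

lemma inner2_sum_left:
  "(\<And>i. i \<in> S \<Longrightarrow> F i \<in> L2T) \<Longrightarrow> h \<in> L2T \<Longrightarrow> inner2 (\<lambda>z. \<Sum>i\<in>S. F i z) h = (\<Sum>i\<in>S. inner2 (F i) h)"
proof (induction S rule: infinite_finite_induct)
  case (infinite A) then show ?case by (simp add: inner2_def)
next
  case empty then show ?case by (simp add: inner2_def)
next
  case (insert x F) then show ?case by (simp add: inner2_add_left L2T_sum)
qed

lemma inner2_sum_right:
  "(\<And>i. i \<in> S \<Longrightarrow> F i \<in> L2T) \<Longrightarrow> h \<in> L2T \<Longrightarrow> inner2 h (\<lambda>z. \<Sum>i\<in>S. F i z) = (\<Sum>i\<in>S. inner2 h (F i))"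
  by (subst inner2_sym) (simp add: inner2_sum_left inner2_sym[of h])

lemma inner2_cong_AE:
  assumes "f \<in> L2T" "f' \<in> L2T" "g \<in> L2T" "g' \<in> L2T"
    "AE z in CM. f z = f' z" "AE z in CM. g z = g' z"
  shows "inner2 f g = inner2 f' g'"
proof -
  have "AE z in CM. f z * cnj (g z) = f' z * cnj (g' z)"
    using assms(5,6) by eventually_elim simp
  then show ?thesis unfolding inner2_def
    by (rule integral_cong_AE[rotated 2]) (use assms(1-4) in auto)
qed

lemma norm2_cong_AE:
  assumes "f \<in> L2T" "f' \<in> L2T" "AE z in CM. f z = f' z"
  shows "norm2 f = norm2 f'"
proof -
  have "AE z in CM. (cmod (f z))^2 = (cmod (f' z))^2"
    using assms(3) by eventually_elim simp
  then have "integral\<^sup>L CM (\<lambda>z. (cmod (f z))^2) = integral\<^sup>L CM (\<lambda>z. (cmod (f' z))^2)"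
    by (rule integral_cong_AE[rotated 2]) (use assms(1-2) in auto)
  then show ?thesis unfolding norm2_def by simp
qed

lemma CS:
  assumes f: "f \<in> L2T" and g: "g \<in> L2T"
  shows "cmod (inner2 f g) \<le> norm2 f * norm2 g"
proof -
  have [measurable]: "f \<in> borel_measurable borel" "g \<in> borel_measurable borel" using f g by auto
  define I where "I = integral\<^sup>L CM (\<lambda>z. cmod (f z) * cmod (g z))"
  have intI: "integrable CM (\<lambda>z. cmod (f z) * cmod (g z))"
    using integrable_norm[OF L2T_prod_int[OF f g]] by (simp add: norm_mult)
  have "(\<integral>\<^sup>+z. ennreal (cmod (f z)) * ennreal (cmod (g z)) \<partial>CM)^2
      \<le> (\<integral>\<^sup>+z. ennreal (cmod (f z)) ^ 2 \<partial>CM) * (\<integral>\<^sup>+z. ennreal (cmod (g z)) ^ 2 \<partial>CM)"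
    by (rule Cauchy_Schwarz_nn_integral) auto
  moreover have "(\<integral>\<^sup>+z. ennreal (cmod (f z)) * ennreal (cmod (g z)) \<partial>CM) = ennreal I"
    unfolding I_def
    by (subst nn_integral_eq_integral[symmetric]) (auto intro!: nn_integral_cong simp: ennreal_mult'' intI)
  moreover have "(\<integral>\<^sup>+z. ennreal (cmod (f z)) ^ 2 \<partial>CM) = ennreal ((norm2 f)^2)"
    unfolding norm2_sq
    by (subst nn_integral_eq_integral[symmetric]) (auto intro!: nn_integral_cong simp: ennreal_power L2T_sq f)
  moreover have "(\<integral>\<^sup>+z. ennreal (cmod (g z)) ^ 2 \<partial>CM) = ennreal ((norm2 g)^2)"
    unfolding norm2_sq
    by (subst nn_integral_eq_integral[symmetric]) (auto intro!: nn_integral_cong simp: ennreal_power L2T_sq g)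
  ultimately have "ennreal I ^ 2 \<le> ennreal ((norm2 f)^2) * ennreal ((norm2 g)^2)"
    by simp
  moreover have "0 \<le> I" unfolding I_def by simp
  ultimately have "ennreal (I^2) \<le> ennreal ((norm2 f)^2 * (norm2 g)^2)"
    by (simp only: ennreal_power ennreal_mult''[symmetric] zero_le_power2)
  then have "I^2 \<le> (norm2 f * norm2 g)^2"
    by (simp add: power_mult_distrib)
  then have "I \<le> norm2 f * norm2 g"
    by (rule power2_le_imp_le) simp
  moreover have "cmod (inner2 f g) \<le> I"
    unfolding inner2_def I_def
    using integral_norm_bound[of CM "\<lambda>z. f z * cnj (g z)"] by (simp add: norm_mult)
  ultimately show ?thesis by linarith
qed

lemma norm2_sq_inner: "(norm2 f)^2 = Re (inner2 f f)"
  by (simp add: inner2_self)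

lemma norm2_triangle:
  assumes f: "f \<in> L2T" and g: "g \<in> L2T"
  shows "norm2 (\<lambda>z. f z + g z) \<le> norm2 f + norm2 g"
proof -
  have "(norm2 (\<lambda>z. f z + g z))^2 = Re (inner2 f f + inner2 f g + (inner2 g f + inner2 g g))"
    unfolding norm2_sq_inner using f g by (simp add: inner2_add_left inner2_add_right L2T_add)
  also have "\<dots> = (norm2 f)^2 + 2 * Re (inner2 f g) + (norm2 g)^2"
    by (simp add: inner2_self inner2_sym[of g f])
  also have "\<dots> \<le> (norm2 f)^2 + 2 * (norm2 f * norm2 g) + (norm2 g)^2"
    using complex_Re_le_cmod[of "inner2 f g"] CS[OF f g] by linarith
  also have "\<dots> = (norm2 f + norm2 g)^2" by (simp add: power2_sum)
  finally show ?thesis by (rule power2_le_imp_le) simp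
qed

lemma norm2_cmult: "norm2 (\<lambda>z. c * f z) = cmod c * norm2 f"
  unfolding norm2_def by (simp add: norm_mult power_mult_distrib real_sqrt_mult)

lemma norm2_minus_commute: "norm2 (\<lambda>z. f z - g z) = norm2 (\<lambda>z. g z - f z)"
  unfolding norm2_def by (simp add: norm_minus_commute)

lemma norm2_triangle_diff:
  assumes "f \<in> L2T" "g \<in> L2T" "h \<in> L2T"
  shows "norm2 (\<lambda>z. f z - h z) \<le> norm2 (\<lambda>z. f z - g z) + norm2 (\<lambda>z. g z - h z)"
  using norm2_triangle[of "\<lambda>z. f z - g z" "\<lambda>z. g z - h z"] assms by (auto simp: L2T_diff)

lemma inner2_cont:
  assumes "f \<in> L2T" "g \<in> L2T" "h \<in> L2T"
  shows "cmod (inner2 f h - inner2 g h) \<le> norm2 (\<lambda>z. f z - g z) * norm2 h"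
  using CS[of "\<lambda>z. f z - g z" h] assms by (simp add: inner2_diff_left L2T_diff)

lemma norm2_eq_0:
  assumes "f \<in> L2T"
  shows "norm2 f = 0 \<longleftrightarrow> (AE z in CM. f z = 0)"
proof -
  have "norm2 f = 0 \<longleftrightarrow> integral\<^sup>L CM (\<lambda>z. (cmod (f z))^2) = 0"
    unfolding norm2_def by simp
  also have "\<dots> \<longleftrightarrow> (AE z in CM. (cmod (f z))^2 = 0)"
    by (rule integral_nonneg_eq_0_iff_AE) (use assms L2T_sq in auto)
  finally show ?thesis by simp
qed

lemma unit_cnj: "cmod z = 1 \<Longrightarrow> cnj z = inverse z"
proof -
  assume z: "cmod z = 1"
  then have "z \<noteq> 0" by auto
  have "z * cnj z = of_real ((cmod z)^2)" by (metis complex_norm_square)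
  then have "z * cnj z = 1" using z by simp
  then show ?thesis using \<open>z \<noteq> 0\<close> by (simp add: field_simps)
qed

lemma rpf_laurent:
  fixes g :: "complex \<Rightarrow> real"
  assumes "real_polynomial_function g"
  shows "\<exists>p::complex poly. \<exists>N::nat. \<forall>z. cmod z = 1 \<longrightarrow> of_real (g z) * z^N = poly p z"
  using assms
proof induction
  case (linear f)
  then interpret bounded_linear f .
  define a where "a = complex_of_real (f 1)"
  define b where "b = complex_of_real (f \<i>)"
  have fz: "f z = Re z * f 1 + Im z * f \<i>" for z
  proof -
    have "z = Re z *\<^sub>R 1 + Im z *\<^sub>R \<i>" by (simp add: complex_eq_iff)
    then have "f z = f (Re z *\<^sub>R 1 + Im z *\<^sub>R \<i>)" by simp
    also have "\<dots> = Re z * f 1 + Im z * f \<i>" by (simp add: add scaleR)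
    finally show ?thesis .
  qed
  show ?case
  proof (intro exI allI impI)
    fix z :: complex assume z: "cmod z = 1"
    then have z0: "z \<noteq> 0" by auto
    have ci: "cnj z = inverse z" using unit_cnj[OF z] .
    have re: "complex_of_real (Re z) = (z + inverse z)/2"
      using complex_add_cnj[of z] ci by simp
    have im: "complex_of_real (Im z) = (z - inverse z)/(2*\<i>)"
      using complex_diff_cnj[of z] ci by (simp add: field_simps)
    have "of_real (f z) * z^1 = (of_real (Re z) * a + of_real (Im z) * b) * z"
      by (simp add: fz[of z] a_def b_def algebra_simps)
    also have "\<dots> = poly [: a/2 - b/(2*\<i>), 0, a/2 + b/(2*\<i>) :] z"
      unfolding re im using z0 by (simp add: field_simps power2_eq_square)
    finally show "of_real (f z) * z^1 = poly [: a/2 - b/(2*\<i>), 0, a/2 + b/(2*\<i>) :] z" .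
  qed
next
  case (const c)
  show ?case by (rule exI[of _ "[:of_real c:]"], rule exI[of _ 0]) simp
next
  case (add f g)
  from add.IH obtain p N q M where
    p: "\<forall>z. cmod z = 1 \<longrightarrow> of_real (f z) * z^N = poly p z" and
    q: "\<forall>z. cmod z = 1 \<longrightarrow> of_real (g z) * z^M = poly q z" by blast
  show ?case
  proof (intro exI allI impI)
    fix z :: complex assume z: "cmod z = 1"
    have "of_real (f z + g z) * z^(N+M) = (of_real (f z) * z^N) * z^M + (of_real (g z) * z^M) * z^N"
      by (simp add: power_add algebra_simps)
    also have "\<dots> = poly (p * monom 1 M + q * monom 1 N) z"
      using p q z by (simp add: poly_monom)
    finally show "of_real (f z + g z) * z^(N+M) = poly (p * monom 1 M + q * monom 1 N) z" .
  qed
next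
  case (mult f g)
  from mult.IH obtain p N q M where
    p: "\<forall>z. cmod z = 1 \<longrightarrow> of_real (f z) * z^N = poly p z" and
    q: "\<forall>z. cmod z = 1 \<longrightarrow> of_real (g z) * z^M = poly q z" by blast
  show ?case
  proof (intro exI allI impI)
    fix z :: complex assume z: "cmod z = 1"
    have "of_real (f z * g z) * z^(N+M) = (of_real (f z) * z^N) * (of_real (g z) * z^M)"
      by (simp add: power_add algebra_simps)
    also have "\<dots> = poly (p * q) z"
      using p q z by simp
    finally show "of_real (f z * g z) * z^(N+M) = poly (p * q) z" .
  qed
qed

lemma poly_meas[measurable]: "(\<lambda>z::complex. poly p z) \<in> borel_measurable borel"
  by (intro borel_measurable_continuous_onI continuous_intros)

lemma int_powi_mult:
  assumes "integrable CM G"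
  shows "integrable CM (\<lambda>z. G z * z powi k)"
proof (rule int_boundI[OF assms])
  show "AE z in CM. norm (G z * z powi k) \<le> norm (G z)"
    using AE_CM by eventually_elim (simp add: norm_mult norm_power_int)
  show "(\<lambda>z. G z * z powi k) \<in> borel_measurable CM"
    using borel_measurable_integrable[OF assms] by simp
qed

lemma int_G_poly:
  assumes G: "integrable CM G" and F: "\<And>n. fourier_coeff G n = 0"
  shows "integral\<^sup>L CM (\<lambda>z. G z * (poly p z * z powi (- int N))) = 0"
proof -
  have "AE z in CM. G z * (poly p z * z powi (- int N)) =
      (\<Sum>i\<le>degree p. coeff p i * (G z * z powi (- (int N - int i))))"
    using AE_CM
  proof eventually_elim
    case (elim z)
    then have z0: "z \<noteq> 0" by auto
    have "G z * (poly p z * z powi (- int N)) = (\<Sum>i\<le>degree p. G z * (coeff p i * z ^ i) * z powi (- int N))"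
      by (simp add: poly_altdef sum_distrib_left sum_distrib_right mult.assoc)
    also have "\<dots> = (\<Sum>i\<le>degree p. coeff p i * (G z * z powi (- (int N - int i))))"
    proof (rule sum.cong[OF refl])
      fix i
      have e: "z powi (int i + - int N) = z powi int i * z powi (- int N)"
        using power_int_add z0 by blast
      have "int i + - int N = - (int N - int i)" by simp
      then have "z ^ i * z powi (- int N) = z powi (- (int N - int i))"
        using e by (metis power_int_of_nat)
      then show "G z * (coeff p i * z ^ i) * z powi (- int N) = coeff p i * (G z * z powi (- (int N - int i)))"
        by (metis (no_types, lifting) mult.assoc mult.left_commute)
    qed
    finally show ?case .
  qed
  then have "integral\<^sup>L CM (\<lambda>z. G z * (poly p z * z powi (- int N))) =
      integral\<^sup>L CM (\<lambda>z. \<Sum>i\<le>degree p. coeff p i * (G z * z powi (- (int N - int i))))"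
    by (rule integral_cong_AE[rotated 2])
       (use borel_measurable_integrable[OF G] in \<open>auto intro!: borel_measurable_sum simp del: power_int_minus\<close>)
  also have "\<dots> = (\<Sum>i\<le>degree p. coeff p i * fourier_coeff G (int N - int i))"
    unfolding fourier_coeff_def
    by (subst Bochner_Integration.integral_sum) (auto intro!: int_powi_mult G)
  also have "\<dots> = 0" by (simp add: F)
  finally show ?thesis .
qed

lemma rpf_meas:
  fixes g :: "complex \<Rightarrow> real"
  assumes "real_polynomial_function g"
  shows "g \<in> borel_measurable borel"
  using assms continuous_on_polymonial_function[of g UNIV] real_polynomial_function_eq
  by (auto intro: borel_measurable_continuous_onI)

lemma int_G_rpf:
  fixes g :: "complex \<Rightarrow> real"
  assumes G: "integrable CM G" and F: "\<And>n. fourier_coeff G n = 0" and g: "real_polynomial_function g"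
  shows "integral\<^sup>L CM (\<lambda>z. G z * of_real (g z)) = 0"
proof -
  obtain p N where pN: "\<forall>z. cmod z = 1 \<longrightarrow> of_real (g z) * z^N = poly p z"
    using rpf_laurent[OF g] by blast
  have gm[measurable]: "g \<in> borel_measurable borel" by (rule rpf_meas[OF g])
  have Gm[measurable]: "G \<in> borel_measurable borel" using borel_measurable_integrable[OF G] by simp
  have "AE z in CM. G z * of_real (g z) = G z * (poly p z * z powi (- int N))"
    using AE_CM
  proof eventually_elim
    case (elim z)
    then have z0: "z \<noteq> 0" by auto
    have "of_real (g z) = poly p z / z^N" using pN elim z0 by (auto simp: field_simps)
    then show ?case by (simp add: power_int_minus divide_inverse)
  qed
  then have "integral\<^sup>L CM (\<lambda>z. G z * of_real (g z)) = integral\<^sup>L CM (\<lambda>z. G z * (poly p z * z powi (- int N)))"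
    by (rule integral_cong_AE[rotated 2]) (auto simp del: power_int_minus)
  also have "\<dots> = 0" by (rule int_G_poly[OF G F])
  finally show ?thesis .
qed

lemma eps_zero:
  fixes I :: complex and A :: real
  assumes "0 \<le> A" "\<And>e. e > 0 \<Longrightarrow> cmod I \<le> e * A"
  shows "I = 0"
proof (rule ccontr)
  assume "I \<noteq> 0"
  then have c: "cmod I > 0" by simp
  define e where "e = cmod I / (2 * (A + 1))"
  have e: "e > 0" unfolding e_def using c assms(1) by simp
  have "cmod I \<le> e * A" by (rule assms(2)[OF e])
  also have "e * A < cmod I"
  proof -
    have "e * A = cmod I * (A / (2 * (A + 1)))" unfolding e_def by simp
    also have "A / (2 * (A + 1)) < 1" using assms(1) by (simp add: field_simps)
    then have "cmod I * (A / (2 * (A + 1))) < cmod I * 1" using c by (intro mult_strict_left_mono) auto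
    finally show ?thesis by simp
  qed
  finally show False by simp
qed

lemma int_cont_mult:
  fixes phi :: "complex \<Rightarrow> real" and G :: "complex \<Rightarrow> complex"
  assumes G: "integrable CM G" and phi: "continuous_on UNIV phi"
  shows "integrable CM (\<lambda>z. G z * of_real (phi z))"
proof -
  have phim[measurable]: "phi \<in> borel_measurable borel" using phi by (rule borel_measurable_continuous_onI)
  have Gm[measurable]: "G \<in> borel_measurable borel" using borel_measurable_integrable[OF G] by simp
  have "bounded (phi ` sphere 0 1)"
    by (rule compact_imp_bounded[OF compact_continuous_image[OF continuous_on_subset[OF phi] compact_sphere]]) simp
  then obtain B where B0: "\<forall>x\<in>phi ` sphere 0 1. norm x \<le> B"
    unfolding bounded_iff by blast
  have B: "\<bar>phi z\<bar> \<le> B" if "cmod z = 1" for z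
    using B0 that by auto
  have B0: "0 \<le> B" using B[of 1] by simp
  show ?thesis
  proof (rule int_boundI[where f="\<lambda>z. B * cmod (G z)"])
    show "integrable CM (\<lambda>z. B * cmod (G z))" using G by simp
    show "AE z in CM. norm (G z * complex_of_real (phi z)) \<le> norm (B * cmod (G z))"
      using AE_CM
    proof eventually_elim
      case (elim z)
      have "cmod (G z) * \<bar>phi z\<bar> \<le> cmod (G z) * B" by (rule mult_left_mono) (use B elim in auto)
      then show ?case using B0 by (simp add: norm_mult mult.commute)
    qed
  qed simp
qed

lemma bnd_aux:
  fixes phi g :: "complex \<Rightarrow> real"
  assumes "cmod z = 1" "\<forall>x\<in>sphere 0 1. norm (phi x - g x) < e"
  shows "cmod (G z * of_real (phi z - g z)) \<le> e * cmod (G z)"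
proof -
  have "\<bar>phi z - g z\<bar> \<le> e" using assms by (auto intro: less_imp_le)
  then have "cmod (G z) * \<bar>phi z - g z\<bar> \<le> cmod (G z) * e" by (rule mult_left_mono) simp
  then show ?thesis by (simp add: norm_mult mult.commute del: of_real_diff)
qed

lemma int_G_cont:
  fixes phi :: "complex \<Rightarrow> real"
  assumes G: "integrable CM G" and F: "\<And>n. fourier_coeff G n = 0" and phi: "continuous_on UNIV phi"
  shows "integral\<^sup>L CM (\<lambda>z. G z * of_real (phi z)) = 0"
proof -
  have phim[measurable]: "phi \<in> borel_measurable borel" using phi by (rule borel_measurable_continuous_onI)
  have Gm[measurable]: "G \<in> borel_measurable borel" using borel_measurable_integrable[OF G] by simp
  have int1: "integrable CM (\<lambda>z. G z * of_real (phi z))"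
    by (rule int_cont_mult[OF G phi])
  define I where "I = integral\<^sup>L CM (\<lambda>z. G z * of_real (phi z))"
  define A where "A = integral\<^sup>L CM (\<lambda>z. cmod (G z))"
  have A0: "0 \<le> A" unfolding A_def by simp
  have "cmod I \<le> e * A" if e: "e > 0" for e
  proof -
    obtain g where g: "polynomial_function g" "\<forall>x\<in>sphere 0 1. norm (phi x - g x) < e"
      using Stone_Weierstrass_polynomial_function[OF compact_sphere continuous_on_subset[OF phi] e] by blast
    have rg: "real_polynomial_function g" using g(1) real_polynomial_function_eq by blast
    have gm[measurable]: "g \<in> borel_measurable borel" by (rule rpf_meas[OF rg])
    have int2: "integrable CM (\<lambda>z. G z * of_real (phi z - g z))"
    proof (rule int_boundI[where f="\<lambda>z. e * cmod (G z)"])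
      show "integrable CM (\<lambda>z. e * cmod (G z))" using G by simp
      show "AE z in CM. norm (G z * complex_of_real (phi z - g z)) \<le> norm (e * cmod (G z))"
        using AE_CM by eventually_elim (use bnd_aux[OF _ g(2)] e in auto)
    qed simp
    have int3: "integrable CM (\<lambda>z. G z * of_real (g z))"
    proof -
      have "integrable CM (\<lambda>z. G z * of_real (phi z) - G z * of_real (phi z - g z))"
        using int1 int2 by simp
      then show ?thesis by (simp add: algebra_simps)
    qed
    have "I = integral\<^sup>L CM (\<lambda>z. G z * of_real (g z) + G z * of_real (phi z - g z))"
      unfolding I_def by (simp add: algebra_simps)
    also have "\<dots> = integral\<^sup>L CM (\<lambda>z. G z * of_real (g z)) + integral\<^sup>L CM (\<lambda>z. G z * of_real (phi z - g z))"
      using int2 int3 by simp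
    also have "\<dots> = integral\<^sup>L CM (\<lambda>z. G z * of_real (phi z - g z))"
      using int_G_rpf[OF G F rg] by simp
    finally have "cmod I \<le> integral\<^sup>L CM (\<lambda>z. cmod (G z * of_real (phi z - g z)))"
      using integral_norm_bound by simp
    also have "\<dots> \<le> integral\<^sup>L CM (\<lambda>z. e * cmod (G z))"
    proof (rule integral_mono_AE)
      show "integrable CM (\<lambda>z. cmod (G z * complex_of_real (phi z - g z)))" using int2 by simp
      show "integrable CM (\<lambda>z. e * cmod (G z))" using G by simp
      show "AE z in CM. cmod (G z * complex_of_real (phi z - g z)) \<le> e * cmod (G z)"
        using AE_CM by eventually_elim (use bnd_aux[OF _ g(2)] in auto)
    qed
    also have "\<dots> = e * A" unfolding A_def by simp
    finally show ?thesis .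
  qed
  then have "I = 0" by (intro eps_zero[OF A0]) auto
  then show ?thesis unfolding I_def .
qed

lemma ind_closed_zero:
  fixes r :: "complex \<Rightarrow> real"
  assumes r: "integrable CM r" and Z: "\<And>phi. continuous_on UNIV phi \<Longrightarrow> integral\<^sup>L CM (\<lambda>z. r z * phi z) = 0"
    and C: "closed C"
  shows "integral\<^sup>L CM (\<lambda>z. r z * indicator C z) = 0"
proof (cases "C = {}")
  case True then show ?thesis by simp
next
  case False
  have rm[measurable]: "r \<in> borel_measurable borel" using borel_measurable_integrable[OF r] by simp
  have Cm[measurable]: "C \<in> sets borel" using C by (rule borel_closed)
  define s where "s = (\<lambda>k::nat. \<lambda>z. r z * max 0 (1 - real k * infdist z C))"
  have cs: "continuous_on UNIV (\<lambda>z. max 0 (1 - real k * infdist z C))" for k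
    by (intro continuous_intros)
  have lim: "(\<lambda>k. integral\<^sup>L CM (s k)) \<longlonglongrightarrow> integral\<^sup>L CM (\<lambda>z. r z * indicator C z)"
  proof (rule integral_dominated_convergence[where w="\<lambda>z. norm (r z)"])
    show "(\<lambda>z. r z * indicator C z) \<in> borel_measurable CM" by simp
    show "s k \<in> borel_measurable CM" for k
      unfolding s_def using borel_measurable_continuous_onI[OF cs[of k]] by simp
    show "integrable CM (\<lambda>z. norm (r z))" using r by simp
    show "AE z in CM. (\<lambda>k. s k z) \<longlonglongrightarrow> r z * indicator C z"
    proof (rule AE_I2)
      fix z
      show "(\<lambda>k. s k z) \<longlonglongrightarrow> r z * indicator C z"
      proof (cases "z \<in> C")
        case True
        then have "infdist z C = 0" using in_closed_iff_infdist_zero[OF C False] by simp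
        then show ?thesis using True by (simp add: s_def)
      next
        case nC: False
        have "infdist z C \<noteq> 0" using in_closed_iff_infdist_zero[OF C False, of z] nC by blast
        then have d: "infdist z C > 0"
          using infdist_nonneg[of z C] by linarith
        have "eventually (\<lambda>k. s k z = r z * indicator C z) sequentially"
          unfolding eventually_sequentially
        proof (intro exI allI impI)
          fix k assume k: "nat \<lceil>1 / infdist z C\<rceil> \<le> k"
          then have "1 / infdist z C \<le> real k" by linarith
          then have "1 \<le> real k * infdist z C" using d by (simp add: field_simps)
          then show "s k z = r z * indicator C z" using nC by (simp add: s_def)
        qed
        then show ?thesis by (rule tendsto_eventually)
      qed
    qed
    show "AE z in CM. norm (s k z) \<le> norm (r z)" for k
    proof (rule AE_I2)
      fix z
      have "\<bar>max 0 (1 - real k * infdist z C)\<bar> \<le> 1"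
        using infdist_nonneg[of z C] by (auto simp: abs_if)
      then show "norm (s k z) \<le> norm (r z)"
        unfolding s_def by (simp add: abs_mult mult_left_le)
    qed
  qed
  moreover have "integral\<^sup>L CM (s k) = 0" for k
    unfolding s_def by (rule Z[OF cs])
  ultimately have "(\<lambda>k. 0) \<longlonglongrightarrow> integral\<^sup>L CM (\<lambda>z. r z * indicator C z)" by simp
  then show ?thesis using LIMSEQ_unique[OF tendsto_const] by metis
qed

lemma int_maxind:
  fixes r :: "complex \<Rightarrow> real"
  assumes r: "integrable CM r" and C: "C \<in> sets borel"
  shows "integrable CM (\<lambda>x. max 0 (r x) * indicator C x)"
proof (rule int_boundI[OF r])
  show "AE x in CM. norm (max 0 (r x) * indicator C x) \<le> norm (r x)"
    by (auto simp: indicator_def)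
  show "(\<lambda>x. max 0 (r x) * indicator C x) \<in> borel_measurable CM"
    using borel_measurable_integrable[OF r] C by simp
qed

lemma zero_from_cont:
  fixes r :: "complex \<Rightarrow> real"
  assumes r: "integrable CM r" and Z: "\<And>phi. continuous_on UNIV phi \<Longrightarrow> integral\<^sup>L CM (\<lambda>z. r z * phi z) = 0"
  shows "AE z in CM. r z = 0"
proof -
  have rm[measurable]: "r \<in> borel_measurable borel" using borel_measurable_integrable[OF r] by simp
  define M1 where "M1 = density CM (\<lambda>z. ennreal (r z))"
  define M2 where "M2 = density CM (\<lambda>z. ennreal (- r z))"
  have e1: "emeasure M1 C = ennreal (integral\<^sup>L CM (\<lambda>z. max 0 (r z) * indicator C z))" if [measurable]: "C \<in> sets borel" for C
  proof -
    have "emeasure M1 C = (\<integral>\<^sup>+z. ennreal (r z) * indicator C z \<partial>CM)"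
      unfolding M1_def by (rule emeasure_density) auto
    also have "\<dots> = (\<integral>\<^sup>+z. ennreal (max 0 (r z) * indicator C z) \<partial>CM)"
      by (intro nn_integral_cong) (auto simp: indicator_def ennreal_neg max_def)
    also have "\<dots> = ennreal (integral\<^sup>L CM (\<lambda>z. max 0 (r z) * indicator C z))"
      by (rule nn_integral_eq_integral) (auto intro!: int_maxind r)
    finally show ?thesis .
  qed
  have e2: "emeasure M2 C = ennreal (integral\<^sup>L CM (\<lambda>z. max 0 (- r z) * indicator C z))" if [measurable]: "C \<in> sets borel" for C
  proof -
    have "emeasure M2 C = (\<integral>\<^sup>+z. ennreal (- r z) * indicator C z \<partial>CM)"
      unfolding M2_def by (rule emeasure_density) auto
    also have "\<dots> = (\<integral>\<^sup>+z. ennreal (max 0 (- r z) * indicator C z) \<partial>CM)"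
      by (intro nn_integral_cong) (auto simp: indicator_def ennreal_neg max_def)
    also have "\<dots> = ennreal (integral\<^sup>L CM (\<lambda>z. max 0 (- r z) * indicator C z))"
      by (rule nn_integral_eq_integral) (auto intro!: int_maxind r)
    finally show ?thesis .
  qed
  have key: "emeasure M1 C = emeasure M2 C" if C: "closed C" for C
  proof -
    have Cm[measurable]: "C \<in> sets borel" using C by (rule borel_closed)
    have i1: "integrable CM (\<lambda>z. max 0 (r z) * indicator C z)"
      by (auto intro!: int_maxind r)
    have i2: "integrable CM (\<lambda>z. max 0 (- r z) * indicator C z)"
      using int_maxind[of "\<lambda>z. - r z" C] r by auto
    have "integral\<^sup>L CM (\<lambda>z. max 0 (r z) * indicator C z) - integral\<^sup>L CM (\<lambda>z. max 0 (- r z) * indicator C z)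
        = integral\<^sup>L CM (\<lambda>z. max 0 (r z) * indicator C z - max 0 (- r z) * indicator C z)"
      by (rule Bochner_Integration.integral_diff[symmetric, OF i1 i2])
    also have "\<dots> = integral\<^sup>L CM (\<lambda>z. r z * indicator C z)"
      by (rule Bochner_Integration.integral_cong) (auto simp: max_def)
    also have "\<dots> = 0" by (rule ind_closed_zero[OF r Z C])
    finally show ?thesis using e1 e2 by simp
  qed
  have M12: "M1 = M2"
  proof (rule measure_eqI_generator_eq[where E="Collect closed" and \<Omega>=UNIV and A="\<lambda>_. UNIV"])
    show "Int_stable (Collect closed)" by (auto simp: Int_stable_def closed_Int)
    show "Collect closed \<subseteq> Pow UNIV" by simp
    show "X \<in> Collect closed \<Longrightarrow> emeasure M1 X = emeasure M2 X" for X using key by simp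
    have sb: "sets borel = sigma_sets (UNIV::complex set) (Collect closed)"
      by (subst borel_eq_closed) simp
    show "sets M1 = sigma_sets UNIV (Collect closed)" unfolding M1_def using sb by simp
    show "sets M2 = sigma_sets UNIV (Collect closed)" unfolding M2_def using sb by simp
    show "range (\<lambda>_. UNIV) \<subseteq> Collect closed" by simp
    show "(\<Union>i::nat. UNIV) = (UNIV :: complex set)" by simp
    show "emeasure M1 UNIV \<noteq> \<infinity>" for i :: nat using e1[of UNIV] by simp
  qed
  have A1: "AE z in CM. \<not> r z > 0"
  proof -
    have [measurable]: "{z. r z > 0} \<in> sets borel" by measurable
    have "emeasure M2 {z. r z > 0} = (\<integral>\<^sup>+z. ennreal (- r z) * indicator {z. r z > 0} z \<partial>CM)"
      unfolding M2_def by (rule emeasure_density) auto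
    also have "\<dots> = (\<integral>\<^sup>+z. 0 \<partial>CM)"
      by (intro nn_integral_cong) (auto simp: indicator_def ennreal_neg)
    finally have "emeasure M1 {z. r z > 0} = 0" using M12 by simp
    then have "(\<integral>\<^sup>+z. ennreal (r z) * indicator {z. r z > 0} z \<partial>CM) = 0"
      unfolding M1_def by (subst (asm) emeasure_density) auto
    then have "AE z in CM. ennreal (r z) * indicator {z. r z > 0} z = 0"
      by (subst (asm) nn_integral_0_iff_AE) auto
    then show ?thesis by eventually_elim (auto simp: indicator_def)
  qed
  have A2: "AE z in CM. \<not> r z < 0"
  proof -
    have [measurable]: "{z. r z < 0} \<in> sets borel" by measurable
    have "emeasure M1 {z. r z < 0} = (\<integral>\<^sup>+z. ennreal (r z) * indicator {z. r z < 0} z \<partial>CM)"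
      unfolding M1_def by (rule emeasure_density) auto
    also have "\<dots> = (\<integral>\<^sup>+z. 0 \<partial>CM)"
      by (intro nn_integral_cong) (auto simp: indicator_def ennreal_neg)
    finally have "emeasure M2 {z. r z < 0} = 0" using M12 by simp
    then have "(\<integral>\<^sup>+z. ennreal (- r z) * indicator {z. r z < 0} z \<partial>CM) = 0"
      unfolding M2_def by (subst (asm) emeasure_density) auto
    then have "AE z in CM. ennreal (- r z) * indicator {z. r z < 0} z = 0"
      by (subst (asm) nn_integral_0_iff_AE) auto
    then show ?thesis by eventually_elim (auto simp: indicator_def)
  qed
  from A1 A2 show ?thesis by eventually_elim simp
qed

theorem fourier_unique:
  assumes G: "integrable CM G" and F: "\<And>n. fourier_coeff G n = 0"
  shows "AE z in CM. G z = 0"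
proof -
  have re: "AE z in CM. Re (G z) = 0"
  proof (rule zero_from_cont)
    show "integrable CM (\<lambda>z. Re (G z))" using G by simp
    fix phi :: "complex \<Rightarrow> real" assume phi: "continuous_on UNIV phi"
    have "integral\<^sup>L CM (\<lambda>z. Re (G z) * phi z) = integral\<^sup>L CM (\<lambda>z. Re (G z * of_real (phi z)))"
      by simp
    also have "\<dots> = Re (integral\<^sup>L CM (\<lambda>z. G z * of_real (phi z)))" by (rule integral_Re[OF int_cont_mult[OF G phi]])
    also have "\<dots> = 0" using int_G_cont[OF G F phi] by simp
    finally show "integral\<^sup>L CM (\<lambda>z. Re (G z) * phi z) = 0" .
  qed
  have im: "AE z in CM. Im (G z) = 0"
  proof (rule zero_from_cont)
    show "integrable CM (\<lambda>z. Im (G z))" using G by simp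
    fix phi :: "complex \<Rightarrow> real" assume phi: "continuous_on UNIV phi"
    have "integral\<^sup>L CM (\<lambda>z. Im (G z) * phi z) = integral\<^sup>L CM (\<lambda>z. Im (G z * of_real (phi z)))"
      by simp
    also have "\<dots> = Im (integral\<^sup>L CM (\<lambda>z. G z * of_real (phi z)))" by (rule integral_Im[OF int_cont_mult[OF G phi]])
    also have "\<dots> = 0" using int_G_cont[OF G F phi] by simp
    finally show "integral\<^sup>L CM (\<lambda>z. Im (G z) * phi z) = 0" .
  qed
  from re im show ?thesis by eventually_elim (simp add: complex_eq_iff)
qed

lemma measure_CM[simp]: "measure CM UNIV = 1"
proof -
  have "ennreal (measure CM UNIV) = 1" using CMp.emeasure_eq_measure[of UNIV] CM_UNIV by simp
  then show ?thesis by simp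
qed

lemma integral_CM_const: "integral\<^sup>L CM (\<lambda>z. c) = (c::'a::{banach, second_countable_topology})"
  using measure_CM by simp

lemma norm2_one: "norm2 (\<lambda>z. 1) = 1"
  unfolding norm2_def by simp

lemma norm2_zero[simp]: "norm2 (\<lambda>z. 0) = 0"
  unfolding norm2_def by simp

lemma L1_le_L2:
  assumes g: "g \<in> L2T"
  shows "integral\<^sup>L CM (\<lambda>z. cmod (g z)) \<le> norm2 g"
proof -
  have gc: "(\<lambda>z. complex_of_real (cmod (g z))) \<in> L2T"
    by (rule L2T_boundI[OF g, where C=1]) (use g in auto)
  have "integral\<^sup>L CM (\<lambda>z. cmod (g z)) = Re (inner2 (\<lambda>z. complex_of_real (cmod (g z))) (\<lambda>z. 1))"
    unfolding inner2_def by simp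
  also have "\<dots> \<le> cmod (inner2 (\<lambda>z. complex_of_real (cmod (g z))) (\<lambda>z. 1))"
    by (rule complex_Re_le_cmod)
  also have "\<dots> \<le> norm2 (\<lambda>z. complex_of_real (cmod (g z))) * norm2 (\<lambda>z. 1)"
    by (rule CS[OF gc]) simp
  also have "norm2 (\<lambda>z. complex_of_real (cmod (g z))) = norm2 g"
    unfolding norm2_def by simp
  finally show ?thesis by (simp add: norm2_one)
qed

lemma norm2_telescope:
  assumes f: "\<And>n. f n \<in> L2T" and fast: "\<And>n. norm2 (\<lambda>z. f (Suc n) z - f n z) \<le> (1/2)^n"
  shows "norm2 (\<lambda>z. f (N + m) z - f m z) \<le> 2 * (1/2)^m - 2 * (1/2)^(m+N)"
proof (induction N)
  case 0 then show ?case by simp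
next
  case (Suc N)
  have "norm2 (\<lambda>z. f (Suc N + m) z - f m z) \<le> norm2 (\<lambda>z. f (Suc (N + m)) z - f (N + m) z) + norm2 (\<lambda>z. f (N + m) z - f m z)"
    using norm2_triangle_diff[of "f (Suc (N+m))" "f (N+m)" "f m"] f by simp
  also have "\<dots> \<le> (1/2)^(N+m) + (2 * (1/2)^m - 2 * (1/2)^(m+N))"
    using fast[of "N+m"] Suc.IH by simp
  also have "\<dots> = 2 * (1/2)^m - 2 * (1/2)^(m + Suc N)"
    by (simp add: add.commute)
  finally show ?case .
qed

lemma L2_complete_fast:
  assumes f: "\<And>n. f n \<in> L2T" and fast: "\<And>n. norm2 (\<lambda>z. f (Suc n) z - f n z) \<le> (1/2)^n"
  shows "\<exists>u\<in>L2T. \<forall>m. norm2 (\<lambda>z. u z - f m z) \<le> 2 * (1/2)^m"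
proof -
  have fm[measurable]: "f n \<in> borel_measurable borel" for n using f[of n] by auto
  define D where "D = (\<lambda>n z. cmod (f (Suc n) z - f n z))"
  have Dm[measurable]: "D n \<in> borel_measurable borel" for n unfolding D_def by measurable
  have DL2: "(\<lambda>z. f (Suc n) z - f n z) \<in> L2T" for n using f by auto
  have intD: "(\<integral>\<^sup>+z. ennreal (D n z) \<partial>CM) \<le> ennreal ((1/2)^n)" for n
  proof -
    have "(\<integral>\<^sup>+z. ennreal (D n z) \<partial>CM) = ennreal (integral\<^sup>L CM (D n))"
      unfolding D_def by (rule nn_integral_eq_integral) (auto intro!: L2T_int DL2)
    also have "integral\<^sup>L CM (D n) \<le> (1/2)^n"
      unfolding D_def using L1_le_L2[OF DL2[of n]] fast[of n] by linarith
    then have "ennreal (integral\<^sup>L CM (D n)) \<le> ennreal ((1/2)^n)" by (rule ennreal_leI)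
    finally show ?thesis .
  qed
  have "(\<integral>\<^sup>+z. (\<Sum>n. ennreal (D n z)) \<partial>CM) = (\<Sum>n. (\<integral>\<^sup>+z. ennreal (D n z) \<partial>CM))"
    by (rule nn_integral_suminf) simp
  also have "\<dots> \<le> (\<Sum>n. ennreal ((1/2)^n))"
    by (intro suminf_le intD) auto
  also have "\<dots> = ennreal 2"
    by (subst suminf_ennreal2) (auto simp: suminf_geometric)
  finally have fin: "(\<integral>\<^sup>+z. (\<Sum>n. ennreal (D n z)) \<partial>CM) \<noteq> \<infinity>"
    by (auto simp: top_unique)
  have "AE z in CM. (\<Sum>n. ennreal (D n z)) \<noteq> \<infinity>"
    by (rule nn_integral_PInf_AE[OF _ fin]) simp
  then have AEconv: "AE z in CM. convergent (\<lambda>n. f n z)"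
  proof eventually_elim
    case (elim z)
    then have "summable (\<lambda>n. D n z)"
      by (intro summable_suminf_not_top) (auto simp: D_def)
    then have "summable (\<lambda>n. f (Suc n) z - f n z)"
      unfolding D_def by (rule summable_norm_cancel)
    then have "convergent (\<lambda>n. \<Sum>i<n. f (Suc i) z - f i z)"
      by (simp add: summable_iff_convergent)
    then have "convergent (\<lambda>n. f n z - f 0 z)"
      using sum_lessThan_telescope[of "\<lambda>i. f i z"] by simp
    then have "convergent (\<lambda>n. (f n z - f 0 z) + f 0 z)"
      by (intro convergent_add convergent_const)
    then show ?case by simp
  qed
  define u where "u = (\<lambda>z. lim (\<lambda>n. f n z))"
  have um[measurable]: "u \<in> borel_measurable borel"
    unfolding u_def by measurable
  have AElim: "AE z in CM. (\<lambda>n. f n z) \<longlonglongrightarrow> u z"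
    using AEconv by eventually_elim (simp add: u_def convergent_LIMSEQ_iff)
  have bnd: "(\<integral>\<^sup>+z. ennreal ((cmod (u z - f m z))^2) \<partial>CM) \<le> ennreal ((2 * (1/2)^m)^2)" for m
  proof -
    define U where "U = (\<lambda>N z. ennreal ((cmod (f (N + m) z - f m z))^2))"
    have Um: "U N \<in> borel_measurable CM" for N unfolding U_def by simp
    have "AE z in CM. liminf (\<lambda>N. U N z) = ennreal ((cmod (u z - f m z))^2)"
      using AElim
    proof eventually_elim
      case (elim z)
      have "(\<lambda>N. f (N + m) z) \<longlonglongrightarrow> u z"
        using LIMSEQ_ignore_initial_segment[OF elim, of m] by simp
      then have "(\<lambda>N. (cmod (f (N + m) z - f m z))^2) \<longlonglongrightarrow> (cmod (u z - f m z))^2"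
        by (intro tendsto_intros)
      then have "(\<lambda>N. U N z) \<longlonglongrightarrow> ennreal ((cmod (u z - f m z))^2)"
        unfolding U_def by (rule tendsto_ennrealI)
      then show ?case by (intro lim_imp_Liminf) auto
    qed
    then have "(\<integral>\<^sup>+z. ennreal ((cmod (u z - f m z))^2) \<partial>CM) = (\<integral>\<^sup>+z. liminf (\<lambda>N. U N z) \<partial>CM)"
      by (intro nn_integral_cong_AE) (auto elim!: eventually_mono)
    also have "\<dots> \<le> liminf (\<lambda>N. integral\<^sup>N CM (U N))"
      by (rule nn_integral_liminf[OF Um])
    also have "\<dots> \<le> ennreal ((2 * (1/2)^m)^2)"
    proof (rule Liminf_le)
      show "\<forall>\<^sub>F N in sequentially. integral\<^sup>N CM (U N) \<le> ennreal ((2 * (1/2)^m)^2)"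
      proof (rule always_eventually, rule allI)
        fix N
        have L: "(\<lambda>z. f (N + m) z - f m z) \<in> L2T" using f by auto
        have "integral\<^sup>N CM (U N) = ennreal ((norm2 (\<lambda>z. f (N + m) z - f m z))^2)"
          unfolding U_def norm2_sq by (rule nn_integral_eq_integral) (auto intro!: L2T_sq L)
        also have "(norm2 (\<lambda>z. f (N + m) z - f m z))^2 \<le> (2 * (1/2)^m)^2"
        proof (rule power_mono)
          show "norm2 (\<lambda>z. f (N + m) z - f m z) \<le> 2 * (1/2)^m"
            using norm2_telescope[OF f fast, of N m] zero_le_power[of "1/2::real" "m+N"] by linarith
        qed simp
        then have "ennreal ((norm2 (\<lambda>z. f (N + m) z - f m z))^2) \<le> ennreal ((2 * (1/2)^m)^2)"
          by (rule ennreal_leI)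
        finally show "integral\<^sup>N CM (U N) \<le> ennreal ((2 * (1/2)^m)^2)" .
      qed
    qed simp
    finally show ?thesis .
  qed
  have dL2: "(\<lambda>z. u z - f m z) \<in> L2T" for m
  proof -
    have "integrable CM (\<lambda>z. (cmod (u z - f m z))^2)"
      unfolding integrable_iff_bounded
    proof
      show "(\<lambda>z. (cmod (u z - f m z))^2) \<in> borel_measurable CM" by simp
      have "(\<integral>\<^sup>+z. ennreal (norm ((cmod (u z - f m z))^2)) \<partial>CM) = (\<integral>\<^sup>+z. ennreal ((cmod (u z - f m z))^2) \<partial>CM)"
        by simp
      also have "\<dots> < \<infinity>" using bnd[of m] by (simp add: le_less_trans)
      finally show "(\<integral>\<^sup>+z. ennreal (norm ((cmod (u z - f m z))^2)) \<partial>CM) < \<infinity>" .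
    qed
    then show ?thesis by (simp add: L2T_iff)
  qed
  have uL2: "u \<in> L2T"
    using L2T_add[OF dL2[of 0] f[of 0]] by simp
  have "norm2 (\<lambda>z. u z - f m z) \<le> 2 * (1/2)^m" for m
  proof -
    have "ennreal ((norm2 (\<lambda>z. u z - f m z))^2) = (\<integral>\<^sup>+z. ennreal ((cmod (u z - f m z))^2) \<partial>CM)"
      unfolding norm2_sq by (rule nn_integral_eq_integral[symmetric]) (auto intro!: L2T_sq dL2)
    also have "\<dots> \<le> ennreal ((2 * (1/2)^m)^2)" by (rule bnd)
    finally have "(norm2 (\<lambda>z. u z - f m z))^2 \<le> (2 * (1/2)^m)^2"
      by (subst (asm) ennreal_le_iff) auto
    then show ?thesis by (rule power2_le_imp_le) simp
  qed
  with uL2 show ?thesis by blast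
qed

lemma L2_complete:
  assumes f: "\<And>n. f n \<in> L2T"
    and cau: "\<And>e. e > 0 \<Longrightarrow> \<exists>N. \<forall>m\<ge>N. \<forall>n\<ge>N. norm2 (\<lambda>z. f m z - f n z) < e"
  shows "\<exists>u\<in>L2T. (\<lambda>n. norm2 (\<lambda>z. f n z - u z)) \<longlonglongrightarrow> 0"
proof -
  have "\<forall>k. \<exists>N. \<forall>m\<ge>N. \<forall>n\<ge>N. norm2 (\<lambda>z. f m z - f n z) < (1/2)^k"
    using cau by simp
  then obtain N where N: "\<And>k m n. m \<ge> N k \<Longrightarrow> n \<ge> N k \<Longrightarrow> norm2 (\<lambda>z. f m z - f n z) < (1/2)^k"
    by metis
  define r where "r k = (\<Sum>j\<le>k. N j)" for k
  have rN: "N k \<le> r k" for k unfolding r_def by (rule member_le_sum) auto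
  have rmono: "r k \<le> r (Suc k)" for k unfolding r_def by simp
  define g where "g k = f (r k)" for k
  have g: "g k \<in> L2T" for k unfolding g_def by (rule f)
  have fast: "norm2 (\<lambda>z. g (Suc k) z - g k z) \<le> (1/2)^k" for k
    unfolding g_def using N[of k "r (Suc k)" "r k"] rN[of k] rmono[of k] by simp
  obtain u where u: "u \<in> L2T" "\<And>m. norm2 (\<lambda>z. u z - g m z) \<le> 2 * (1/2)^m"
    using L2_complete_fast[OF g fast] by blast
  have "(\<lambda>n. norm2 (\<lambda>z. f n z - u z)) \<longlonglongrightarrow> 0"
  proof (rule LIMSEQ_I)
    fix e :: real assume e: "0 < e"
    obtain k where k: "(1/2::real)^k < e/3" using real_arch_pow_inv[of "e/3" "1/2"] e by auto
    show "\<exists>no. \<forall>n\<ge>no. norm (norm2 (\<lambda>z. f n z - u z) - 0) < e"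
    proof (intro exI allI impI)
      fix n assume n: "N k \<le> n"
      have "norm2 (\<lambda>z. f n z - u z) \<le> norm2 (\<lambda>z. f n z - g k z) + norm2 (\<lambda>z. g k z - u z)"
        by (rule norm2_triangle_diff[OF f g u(1)])
      also have "norm2 (\<lambda>z. f n z - g k z) < (1/2)^k"
        unfolding g_def using N[of k n "r k"] n rN[of k] by simp
      also have "norm2 (\<lambda>z. g k z - u z) \<le> 2 * (1/2)^k"
        using u(2)[of k] norm2_minus_commute[of "g k" u] by simp
      finally show "norm (norm2 (\<lambda>z. f n z - u z) - 0) < e" using k by simp
    qed
  qed
  with u(1) show ?thesis by blast
qed

lemma mult_cnj_sq: "a * cnj a = complex_of_real ((cmod a)^2)"
  by (metis complex_norm_square)

lemma L2T_power[simp, intro]: "(\<lambda>z. z ^ k) \<in> L2T"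
  using L2T_powi[of "int k"] by simp

lemma cnj_powi_unit: "cmod z = 1 \<Longrightarrow> cnj (z powi k) = z powi (- k)"
proof -
  assume z: "cmod z = 1"
  have "cmod (z powi k) = 1" using z by (simp add: norm_power_int)
  then have "cnj (z powi k) = inverse (z powi k)" by (rule unit_cnj)
  then show ?thesis by (simp add: power_int_minus)
qed

lemma fc_inner:
  assumes "f \<in> borel_measurable borel"
  shows "fourier_coeff f n = inner2 f (\<lambda>z. z powi n)"
  unfolding fourier_coeff_def inner2_def
proof (rule integral_cong_AE)
  show "AE z in CM. f z * z powi - n = f z * cnj (z powi n)"
    using AE_CM
  proof eventually_elim
    case (elim z)
    show ?case using cnj_powi_unit[OF elim, of n] by simp
  qed
qed (use assms in \<open>auto simp del: power_int_minus\<close>)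

lemma fc_nat:
  assumes "f \<in> borel_measurable borel"
  shows "fourier_coeff f (int k) = inner2 f (\<lambda>z. z ^ k)"
  using fc_inner[OF assms, of "int k"] by simp

lemma inner_powi: "inner2 (\<lambda>z. z powi j) (\<lambda>z. z powi k) = (if j = k then 1 else 0)"
proof -
  have "inner2 (\<lambda>z. z powi j) (\<lambda>z. z powi k) = integral\<^sup>L CM (\<lambda>z. z powi (j - k))"
    unfolding inner2_def
  proof (rule integral_cong_AE)
    show "AE z in CM. z powi j * cnj (z powi k) = z powi (j - k)"
      using AE_CM
    proof eventually_elim
      case (elim z)
      then have z0: "z \<noteq> 0" by auto
      have "z powi j * cnj (z powi k) = z powi j * z powi (- k)"
        using cnj_powi_unit[OF elim] by simp
      also have "\<dots> = z powi (j + - k)" using power_int_add[of z j "- k"] z0 by metis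
      finally show ?case by simp
    qed
  qed (auto simp del: power_int_minus)
  also have "\<dots> = (if j = k then 1 else 0)" by (simp add: CM_powi)
  finally show ?thesis .
qed

lemma inner_power: "inner2 (\<lambda>z. z ^ j) (\<lambda>z. z ^ k) = (if j = k then 1 else 0)"
  using inner_powi[of "int j" "int k"] by simp

lemma inner_power_powi: "n < 0 \<Longrightarrow> inner2 (\<lambda>z. z ^ j) (\<lambda>z. z powi n) = 0"
  using inner_powi[of "int j" n] by simp

lemma L2T_trig[simp, intro]: "(\<lambda>z. \<Sum>k\<in>S. a k * z ^ k) \<in> L2T"
  by (intro L2T_sum L2T_cmult L2T_power)

lemma trig_inner:
  assumes "finite S"
  shows "inner2 (\<lambda>z. \<Sum>k\<in>S. a k * z ^ k) (\<lambda>z. z ^ j) = (if j \<in> S then a j else 0)"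
proof -
  have "inner2 (\<lambda>z. \<Sum>k\<in>S. a k * z ^ k) (\<lambda>z. z ^ j) = (\<Sum>k\<in>S. inner2 (\<lambda>z. a k * z ^ k) (\<lambda>z. z ^ j))"
    by (rule inner2_sum_left) auto
  also have "\<dots> = (\<Sum>k\<in>S. a k * (if k = j then 1 else 0))"
    by (simp add: inner2_cmult_left inner_power)
  also have "\<dots> = (if j \<in> S then a j else 0)"
    using assms by (simp add: if_distrib cong: if_cong)
  finally show ?thesis .
qed

lemma trig_inner_neg:
  assumes "n < 0"
  shows "inner2 (\<lambda>z. \<Sum>k\<in>S. a k * z ^ k) (\<lambda>z. z powi n) = 0"
proof -
  have "inner2 (\<lambda>z. \<Sum>k\<in>S. a k * z ^ k) (\<lambda>z. z powi n) = (\<Sum>k\<in>S. inner2 (\<lambda>z. a k * z ^ k) (\<lambda>z. z powi n))"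
    by (rule inner2_sum_left) auto
  also have "\<dots> = 0"
    using assms by (simp add: inner2_cmult_left inner_power_powi)
  finally show ?thesis .
qed

lemma trig_inner_right:
  assumes "F \<in> L2T"
  shows "inner2 F (\<lambda>z. \<Sum>k\<in>S. a k * z ^ k) = (\<Sum>k\<in>S. cnj (a k) * inner2 F (\<lambda>z. z ^ k))"
proof -
  have "inner2 F (\<lambda>z. \<Sum>k\<in>S. a k * z ^ k) = (\<Sum>k\<in>S. inner2 F (\<lambda>z. a k * z ^ k))"
    by (rule inner2_sum_right) (auto simp: assms)
  also have "\<dots> = (\<Sum>k\<in>S. cnj (a k) * inner2 F (\<lambda>z. z ^ k))"
    by (simp add: inner2_cmult_right)
  finally show ?thesis .
qed

lemma trig_norm:
  assumes "finite S"
  shows "(norm2 (\<lambda>z. \<Sum>k\<in>S. a k * z ^ k))^2 = (\<Sum>k\<in>S. (cmod (a k))^2)"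
proof -
  have "inner2 (\<lambda>z. \<Sum>k\<in>S. a k * z ^ k) (\<lambda>z. \<Sum>k\<in>S. a k * z ^ k)
      = (\<Sum>k\<in>S. cnj (a k) * (if k \<in> S then a k else 0))"
    by (simp add: trig_inner_right trig_inner assms)
  also have "\<dots> = (\<Sum>k\<in>S. of_real ((cmod (a k))^2))"
    by (intro sum.cong refl) (simp add: mult_cnj_sq mult.commute del: of_real_power)
  finally have "inner2 (\<lambda>z. \<Sum>k\<in>S. a k * z ^ k) (\<lambda>z. \<Sum>k\<in>S. a k * z ^ k) = of_real (\<Sum>k\<in>S. (cmod (a k))^2)"
    by simp
  then have "complex_of_real ((norm2 (\<lambda>z. \<Sum>k\<in>S. a k * z ^ k))^2) = of_real (\<Sum>k\<in>S. (cmod (a k))^2)"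
    by (simp only: inner2_self)
  then show ?thesis by (simp only: of_real_eq_iff)
qed

definition ps :: "(complex \<Rightarrow> complex) \<Rightarrow> nat \<Rightarrow> complex \<Rightarrow> complex" where
  "ps F N = (\<lambda>z. \<Sum>k<N. fourier_coeff F (int k) * z ^ k)"

lemma ps_L2[simp, intro]: "ps F N \<in> L2T"
  unfolding ps_def by (rule L2T_trig)

lemma ps_diff:
  assumes "N \<le> M"
  shows "(\<lambda>z. ps F M z - ps F N z) = (\<lambda>z. \<Sum>k\<in>{N..<M}. fourier_coeff F (int k) * z ^ k)"
proof (rule ext)
  fix z
  have "{..<M} = {..<N} \<union> {N..<M}" using assms by auto
  then have "(\<Sum>k<M. fourier_coeff F (int k) * z ^ k) = (\<Sum>k<N. fourier_coeff F (int k) * z ^ k) + (\<Sum>k\<in>{N..<M}. fourier_coeff F (int k) * z ^ k)"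
    by (simp add: sum.union_disjoint ivl_disj_int)
  then show "ps F M z - ps F N z = (\<Sum>k\<in>{N..<M}. fourier_coeff F (int k) * z ^ k)"
    unfolding ps_def by simp
qed

lemma bessel:
  assumes F: "F \<in> L2T"
  shows "(\<Sum>k<N. (cmod (fourier_coeff F (int k)))^2) \<le> (norm2 F)^2"
proof -
  define c where "c k = fourier_coeff F (int k)" for k
  define S where "S = (\<Sum>k<N. (cmod (c k))^2)"
  have Fm: "F \<in> borel_measurable borel" using F by auto
  have c: "c k = inner2 F (\<lambda>z. z ^ k)" for k unfolding c_def by (rule fc_nat[OF Fm])
  have t: "ps F N = (\<lambda>z. \<Sum>k<N. c k * z ^ k)" unfolding ps_def c_def ..
  have Ft: "inner2 F (ps F N) = of_real S"
    unfolding t S_def by (simp add: trig_inner_right F c[symmetric] mult_cnj_sq mult.commute del: of_real_power)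
  have "(norm2 (\<lambda>z. \<Sum>k<N. c k * z ^ k))^2 = S"
    unfolding S_def by (rule trig_norm) simp
  then have nt: "(norm2 (ps F N))^2 = S" unfolding t .
  then have tt: "inner2 (ps F N) (ps F N) = of_real S"
    by (simp only: inner2_self)
  have tF: "inner2 (ps F N) F = of_real S" by (subst inner2_sym) (simp add: Ft)
  have "0 \<le> (norm2 (\<lambda>z. F z - ps F N z))^2" by simp
  also have "(norm2 (\<lambda>z. F z - ps F N z))^2 = Re (inner2 F F - inner2 F (ps F N) - (inner2 (ps F N) F - inner2 (ps F N) (ps F N)))"
    unfolding norm2_sq_inner using F by (simp add: inner2_diff_left inner2_diff_right L2T_diff)
  also have "\<dots> = (norm2 F)^2 - S"
    by (simp add: Ft tt tF inner2_self nt)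
  finally show ?thesis unfolding S_def c_def by simp
qed

lemma ps_cauchy:
  assumes F: "F \<in> L2T" and e: "e > 0"
  shows "\<exists>N0. \<forall>m\<ge>N0. \<forall>n\<ge>N0. norm2 (\<lambda>z. ps F m z - ps F n z) < e"
proof -
  define a where "a k = (cmod (fourier_coeff F (int k)))^2" for k
  have "summable a"
    by (rule summableI_nonneg_bounded[where x="(norm2 F)^2"]) (auto simp: a_def bessel[OF F])
  then obtain N0 where N0: "\<And>m n. m \<ge> N0 \<Longrightarrow> norm (sum a {m..<n}) < e^2"
    unfolding summable_Cauchy using e by (meson zero_less_power)
  have key: "norm2 (\<lambda>z. ps F m z - ps F n z) < e" if "n \<ge> N0" "n \<le> m" for m n
  proof -
    have "(norm2 (\<lambda>z. ps F m z - ps F n z))^2 = sum a {n..<m}"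
      unfolding ps_diff[OF that(2)] a_def by (rule trig_norm) simp
    also have "\<dots> < e^2" using N0[OF that(1), of m] by (simp add: a_def)
    finally show ?thesis using e by (meson power_less_imp_less_base less_le)
  qed
  show ?thesis
  proof (intro exI allI impI)
    fix m n assume "m \<ge> N0" "n \<ge> N0"
    then show "norm2 (\<lambda>z. ps F m z - ps F n z) < e"
      using key[of n m] key[of m n] norm2_minus_commute[of "ps F m" "ps F n"]
      by (cases "n \<le> m") auto
  qed
qed

lemma inner_lim:
  assumes f: "\<And>N. f N \<in> L2T" and u: "u \<in> L2T" and e: "e \<in> L2T"
    and lim: "(\<lambda>N. norm2 (\<lambda>z. f N z - u z)) \<longlonglongrightarrow> 0"
  shows "(\<lambda>N. inner2 (f N) e) \<longlonglongrightarrow> inner2 u e"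
proof -
  have "(\<lambda>N. inner2 (f N) e - inner2 u e) \<longlonglongrightarrow> 0"
  proof (rule Lim_null_comparison)
    show "\<forall>\<^sub>F N in sequentially. norm (inner2 (f N) e - inner2 u e) \<le> norm2 (\<lambda>z. f N z - u z) * norm2 e"
      using inner2_cont[OF f u e] by simp
    show "(\<lambda>N. norm2 (\<lambda>z. f N z - u z) * norm2 e) \<longlonglongrightarrow> 0"
      using tendsto_mult_left_zero[OF lim] by simp
  qed
  then show ?thesis by (rule LIM_zero_cancel)
qed

lemma inner_lim_right:
  assumes f: "\<And>N. f N \<in> L2T" and u: "u \<in> L2T" and e: "e \<in> L2T"
    and lim: "(\<lambda>N. norm2 (\<lambda>z. f N z - u z)) \<longlonglongrightarrow> 0"
  shows "(\<lambda>N. inner2 e (f N)) \<longlonglongrightarrow> inner2 e u"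
proof -
  have "(\<lambda>N. cnj (inner2 (f N) e)) \<longlonglongrightarrow> cnj (inner2 u e)"
    by (rule tendsto_cnj[OF inner_lim[OF f u e lim]])
  then show ?thesis by (simp add: inner2_sym[of e])
qed

lemma proj_exists:
  assumes F: "F \<in> L2T"
  shows "\<exists>u. u \<in> H2 \<and> (\<lambda>N. norm2 (\<lambda>z. ps F N z - u z)) \<longlonglongrightarrow> 0 \<and>
             (\<forall>k::nat. fourier_coeff u (int k) = fourier_coeff F (int k))"
proof -
  obtain u where u: "u \<in> L2T" and lim: "(\<lambda>N. norm2 (\<lambda>z. ps F N z - u z)) \<longlonglongrightarrow> 0"
    using L2_complete[of "ps F", OF ps_L2 ps_cauchy[OF F]] by blast
  have um: "u \<in> borel_measurable borel" using u by auto
  have neg: "fourier_coeff u n = 0" if n: "n < 0" for n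
  proof -
    have "(\<lambda>N. inner2 (ps F N) (\<lambda>z. z powi n)) \<longlonglongrightarrow> inner2 u (\<lambda>z. z powi n)"
      by (rule inner_lim[OF ps_L2 u L2T_powi lim])
    moreover have "inner2 (ps F N) (\<lambda>z. z powi n) = 0" for N
      unfolding ps_def by (rule trig_inner_neg[OF n])
    ultimately have "(\<lambda>N. 0) \<longlonglongrightarrow> inner2 u (\<lambda>z. z powi n)" by simp
    then have "inner2 u (\<lambda>z. z powi n) = 0" using LIMSEQ_unique[OF tendsto_const] by metis
    then show ?thesis using fc_inner[OF um] by simp
  qed
  have pos: "fourier_coeff u (int k) = fourier_coeff F (int k)" for k
  proof -
    have "(\<lambda>N. inner2 (ps F N) (\<lambda>z. z ^ k)) \<longlonglongrightarrow> inner2 u (\<lambda>z. z ^ k)"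
      by (rule inner_lim[OF ps_L2 u L2T_power lim])
    moreover have "eventually (\<lambda>N. inner2 (ps F N) (\<lambda>z. z ^ k) = fourier_coeff F (int k)) sequentially"
      unfolding eventually_sequentially
      by (rule exI[of _ "Suc k"]) (auto simp: ps_def trig_inner)
    then have "(\<lambda>N. inner2 (ps F N) (\<lambda>z. z ^ k)) \<longlonglongrightarrow> fourier_coeff F (int k)"
      by (rule tendsto_eventually)
    ultimately have "inner2 u (\<lambda>z. z ^ k) = fourier_coeff F (int k)" using LIMSEQ_unique by blast
    then show ?thesis using fc_nat[OF um] by simp
  qed
  have "u \<in> H2" unfolding H2_def using u neg by simp
  then show ?thesis using lim pos by blast
qed

lemma fc_diff:
  assumes "f \<in> L2T" "g \<in> L2T"
  shows "fourier_coeff (\<lambda>z. f z - g z) n = fourier_coeff f n - fourier_coeff g n"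
  unfolding fourier_coeff_def using assms
  by (simp add: left_diff_distrib L2T_prod_int)

lemma ps_H2_conv:
  assumes B: "B \<in> H2"
  shows "(\<lambda>N. norm2 (\<lambda>z. ps B N z - B z)) \<longlonglongrightarrow> 0"
proof -
  have BL: "B \<in> L2T" using B by (simp add: H2_def)
  obtain u where u: "u \<in> H2" and lim: "(\<lambda>N. norm2 (\<lambda>z. ps B N z - u z)) \<longlonglongrightarrow> 0"
    and pos: "\<And>k::nat. fourier_coeff u (int k) = fourier_coeff B (int k)"
    using proj_exists[OF BL] by blast
  have uL: "u \<in> L2T" using u by (simp add: H2_def)
  have "fourier_coeff (\<lambda>z. B z - u z) n = 0" for n
  proof (cases "n < 0")
    case True
    then show ?thesis using B u by (simp add: fc_diff BL uL H2_def)
  next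
    case False
    then obtain k where "n = int k" by (metis nonneg_int_cases not_less)
    then show ?thesis using pos[of k] by (simp add: fc_diff BL uL)
  qed
  then have "AE z in CM. B z - u z = 0"
    by (intro fourier_unique L2T_int) (auto intro: BL uL)
  then have "AE z in CM. ps B N z - B z = ps B N z - u z" for N
    by eventually_elim simp
  then have "norm2 (\<lambda>z. ps B N z - B z) = norm2 (\<lambda>z. ps B N z - u z)" for N
    by (rule norm2_cong_AE[rotated 2]) (auto intro: BL uL)
  then show ?thesis using lim by simp
qed

lemma proj:
  assumes F: "F \<in> L2T"
  shows "\<exists>u\<in>H2. \<forall>e\<in>H2. inner2 (\<lambda>z. F z - u z) e = 0"
proof -
  obtain u where u: "u \<in> H2" and pos: "\<And>k::nat. fourier_coeff u (int k) = fourier_coeff F (int k)"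
    using proj_exists[OF F] by blast
  have uL: "u \<in> L2T" using u by (simp add: H2_def)
  have D: "(\<lambda>z. F z - u z) \<in> L2T" using F uL by auto
  have "inner2 (\<lambda>z. F z - u z) e = 0" if e: "e \<in> H2" for e
  proof -
    have eL: "e \<in> L2T" using e by (simp add: H2_def)
    have "(\<lambda>N. inner2 (\<lambda>z. F z - u z) (ps e N)) \<longlonglongrightarrow> inner2 (\<lambda>z. F z - u z) e"
      by (rule inner_lim_right[OF ps_L2 eL D ps_H2_conv[OF e]])
    moreover have "inner2 (\<lambda>z. F z - u z) (ps e N) = 0" for N
    proof -
      have "inner2 (\<lambda>z. F z - u z) (ps e N) = (\<Sum>k<N. cnj (fourier_coeff e (int k)) * inner2 (\<lambda>z. F z - u z) (\<lambda>z. z ^ k))"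
        unfolding ps_def by (rule trig_inner_right[OF D])
      also have "\<dots> = 0"
      proof (rule sum.neutral, rule ballI)
        fix k
        have "inner2 (\<lambda>z. F z - u z) (\<lambda>z. z ^ k) = fourier_coeff (\<lambda>z. F z - u z) (int k)"
          using fc_nat[of "\<lambda>z. F z - u z" k] D by auto
        also have "\<dots> = 0" using pos[of k] by (simp add: fc_diff F uL)
        finally show "cnj (fourier_coeff e (int k)) * inner2 (\<lambda>z. F z - u z) (\<lambda>z. z ^ k) = 0" by simp
      qed
      finally show ?thesis .
    qed
    ultimately have "(\<lambda>N. 0) \<longlonglongrightarrow> inner2 (\<lambda>z. F z - u z) e" by simp
    then show ?thesis using LIMSEQ_unique[OF tendsto_const] by metis
  qed
  with u show ?thesis by blast
qed

lemma Pplus_props: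
  assumes F: "F \<in> L2T"
  shows "Pplus F \<in> H2" "\<And>e. e \<in> H2 \<Longrightarrow> inner2 (\<lambda>z. F z - Pplus F z) e = 0"
proof -
  have "\<exists>u. u \<in> H2 \<and> (\<forall>e\<in>H2. inner2 (\<lambda>z. F z - u z) e = 0)" using proj[OF F] by blast
  then have "Pplus F \<in> H2 \<and> (\<forall>e\<in>H2. inner2 (\<lambda>z. F z - Pplus F z) e = 0)"
    unfolding Pplus_def by (rule someI_ex)
  then show "Pplus F \<in> H2" "\<And>e. e \<in> H2 \<Longrightarrow> inner2 (\<lambda>z. F z - Pplus F z) e = 0" by auto
qed

lemma H2_L2: "u \<in> H2 \<Longrightarrow> u \<in> L2T"
  by (simp add: H2_def)

lemma power_H2[simp, intro]: "(\<lambda>z. z ^ j) \<in> H2"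
  unfolding H2_def using fc_inner[of "\<lambda>z. z ^ j"] inner_power_powi[of _ j] by auto

lemma cnj_L2T_diff: "norm2 (\<lambda>z. cnj (f z) - cnj (g z)) = norm2 (\<lambda>z. f z - g z)"
proof -
  have "\<And>z. cmod (cnj (f z) - cnj (g z)) = cmod (f z - g z)"
    by (metis complex_cnj_diff complex_mod_cnj)
  then show ?thesis unfolding norm2_def by simp
qed

lemma powi_nat_add: "(z::complex) powi (int k + int m) = z ^ (m + k)"
  by (metis add.commute of_nat_add power_int_of_nat)

lemma H2_prod:
  assumes u: "u \<in> H2" and v: "v \<in> H2" and m: "m \<ge> 1"
  shows "integral\<^sup>L CM (\<lambda>z. z ^ m * u z * v z) = 0"
proof -
  have uL: "u \<in> L2T" and vL: "v \<in> L2T" using u v by (auto simp: H2_L2)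
  have um: "u \<in> borel_measurable borel" using uL by auto
  define U where "U = (\<lambda>z. z ^ m * u z)"
  have UL: "U \<in> L2T" unfolding U_def
    by (rule L2T_boundI[OF uL, where C=1]) (use AE_CM uL in \<open>auto simp: norm_mult norm_power elim!: eventually_mono\<close>)
  have eq: "integral\<^sup>L CM (\<lambda>z. z ^ m * u z * w z) = inner2 U (\<lambda>z. cnj (w z))" for w
    unfolding inner2_def U_def by (simp add: mult.assoc)
  have lim: "(\<lambda>N. inner2 U (\<lambda>z. cnj (ps v N z))) \<longlonglongrightarrow> inner2 U (\<lambda>z. cnj (v z))"
  proof (rule inner_lim_right)
    show "(\<lambda>z. cnj (ps v N z)) \<in> L2T" for N by simp
    show "(\<lambda>z. cnj (v z)) \<in> L2T" using vL by simp
    show "U \<in> L2T" by (rule UL)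
    show "(\<lambda>N. norm2 (\<lambda>z. cnj (ps v N z) - cnj (v z))) \<longlonglongrightarrow> 0"
      unfolding cnj_L2T_diff by (rule ps_H2_conv[OF v])
  qed
  have zero: "inner2 U (\<lambda>z. cnj (ps v N z)) = 0" for N
  proof -
    have "inner2 U (\<lambda>z. cnj (ps v N z)) = integral\<^sup>L CM (\<lambda>z. \<Sum>k<N. fourier_coeff v (int k) * (u z * z ^ (m + k)))"
      unfolding inner2_def U_def ps_def
      by (intro Bochner_Integration.integral_cong refl) (simp add: sum_distrib_left sum_distrib_right power_add mult_ac)
    also have "\<dots> = (\<Sum>k<N. fourier_coeff v (int k) * integral\<^sup>L CM (\<lambda>z. u z * z ^ (m + k)))"
      by (subst Bochner_Integration.integral_sum) (auto simp: L2T_prod_int[OF uL L2T_power])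
    also have "\<dots> = (\<Sum>k<N. fourier_coeff v (int k) * fourier_coeff u (- int (m + k)))"
      unfolding fourier_coeff_def by (simp add: powi_nat_add)
    also have "\<dots> = 0"
      using u m by (auto simp: H2_def)
    finally show ?thesis .
  qed
  have "(\<lambda>N. 0) \<longlonglongrightarrow> inner2 U (\<lambda>z. cnj (v z))" using lim zero by simp
  then have "inner2 U (\<lambda>z. cnj (v z)) = 0" using LIMSEQ_unique[OF tendsto_const] by metis
  then show ?thesis using eq[of v] by simp
qed

lemma inner_LinfT: "inner_fun \<Theta> \<Longrightarrow> \<Theta> \<in> LinfT"
  unfolding inner_fun_def LinfT_def
  by (auto simp: H2_def intro!: exI[of _ 1] elim!: eventually_mono)

lemma bounded_H2_mult:
  assumes T: "\<Theta> \<in> H2" "\<Theta> \<in> LinfT" and h: "h \<in> H2"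
  shows "(\<lambda>z. \<Theta> z * h z) \<in> H2"
proof -
  have L: "(\<lambda>z. \<Theta> z * h z) \<in> L2T" by (rule LinfT_mult[OF T(2) H2_L2[OF h]])
  have "fourier_coeff (\<lambda>z. \<Theta> z * h z) n = 0" if n: "n < 0" for n
  proof -
    have "fourier_coeff (\<lambda>z. \<Theta> z * h z) n = integral\<^sup>L CM (\<lambda>z. z ^ nat (- n) * \<Theta> z * h z)"
      unfolding fourier_coeff_def
      by (intro Bochner_Integration.integral_cong refl) (use n in \<open>simp add: power_int_def mult_ac\<close>)
    also have "\<dots> = 0" by (rule H2_prod[OF T(1) h]) (use n in simp)
    finally show ?thesis .
  qed
  with L show ?thesis by (simp add: H2_def)
qed

lemma outer_nonzero:
  assumes "outer_fun p"
  shows "AE z in CM. p z \<noteq> 0"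
proof (rule ccontr)
  assume nAE: "\<not> (AE z in CM. p z \<noteq> 0)"
  have pH: "p \<in> H2" using assms by (simp add: outer_fun_def)
  have pm[measurable]: "p \<in> borel_measurable borel" using H2_L2[OF pH] by auto
  define A where "A = {z. p z = 0}"
  have Am[measurable]: "A \<in> sets borel" unfolding A_def by measurable
  have "emeasure CM A \<noteq> 0"
    using nAE by (subst (asm) AE_iff_measurable[where N=A]) (auto simp: A_def)
  then have d: "measure CM A > 0"
    using CMp.emeasure_eq_measure[of A] by (simp add: zero_less_measure_iff)
  have oneH: "(\<lambda>z. 1) \<in> H2" using power_H2[of 0] by simp
  obtain q :: "complex poly" where q: "norm2 (\<lambda>z. poly q z * p z - 1) < sqrt (measure CM A)"
    using assms oneH d unfolding outer_fun_def by (meson real_sqrt_gt_zero)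
  have qpL: "(\<lambda>z. poly q z * p z - 1) \<in> L2T"
  proof -
    have "(\<lambda>z. poly q z * p z) \<in> L2T"
    proof (rule L2T_boundI[OF H2_L2[OF pH], where C="\<Sum>i\<le>degree q. cmod (coeff q i)"])
      show "AE z in CM. cmod (poly q z * p z) \<le> (\<Sum>i\<le>degree q. cmod (coeff q i)) * cmod (p z)"
        using AE_CM
      proof eventually_elim
        case (elim z)
        have "cmod (poly q z) \<le> (\<Sum>i\<le>degree q. cmod (coeff q i * z ^ i))"
          unfolding poly_altdef by (rule norm_sum)
        also have "\<dots> = (\<Sum>i\<le>degree q. cmod (coeff q i))"
          using elim by (simp add: norm_mult norm_power)
        finally show ?case by (simp add: norm_mult mult_right_mono)
      qed
    qed simp
    then show ?thesis by auto
  qed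
  have "measure CM A = integral\<^sup>L CM (indicator A :: complex \<Rightarrow> real)" by simp
  also have "\<dots> \<le> integral\<^sup>L CM (\<lambda>z. (cmod (poly q z * p z - 1))^2)"
  proof (rule integral_mono)
    show "integrable CM (indicator A :: complex \<Rightarrow> real)"
      by (rule integrable_real_indicator) (auto simp: less_top[symmetric])
    show "integrable CM (\<lambda>z. (cmod (poly q z * p z - 1))^2)" using L2T_sq[OF qpL] .
    show "indicator A z \<le> (cmod (poly q z * p z - 1))^2" for z
      by (auto simp: A_def indicator_def)
  qed
  also have "\<dots> = (norm2 (\<lambda>z. poly q z * p z - 1))^2" by (simp add: norm2_sq)
  also have "\<dots> < (sqrt (measure CM A))^2" using q by (intro power_strict_mono) auto
  also have "\<dots> = measure CM A" by simp
  finally show False by simp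
qed

lemma L2T_z_mult:
  assumes f: "f \<in> L2T" shows "(\<lambda>z. z * f z) \<in> L2T"
proof (rule L2T_boundI[where C=1 and f=f, OF f])
  show "AE z in CM. cmod (z * f z) \<le> 1 * cmod (f z)"
    using AE_CM
  proof eventually_elim
    case (elim z)
    then show ?case by (simp add: norm_mult)
  qed
qed (use f in auto)

lemma norm2_z_mult:
  assumes f: "f \<in> L2T" shows "norm2 (\<lambda>z. z * f z) = norm2 f"
proof -
  have "AE z in CM. (cmod (z * f z))^2 = (cmod (f z))^2"
    using AE_CM by eventually_elim (simp add: norm_mult)
  then have "integral\<^sup>L CM (\<lambda>z. (cmod (z * f z))^2) = integral\<^sup>L CM (\<lambda>z. (cmod (f z))^2)"
    by (rule integral_cong_AE[rotated 2]) (use f in auto)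
  then show ?thesis unfolding norm2_def by simp
qed

lemma alg_k:
  fixes T t z p h :: complex
  assumes "cnj T = inverse T" "T \<noteq> 0" "cnj t = inverse t" "t \<noteq> 0" "p \<noteq> 0"
  shows "T * cnj (t * z * p) / p * (t * p) * cnj (T * h) = cnj (z * p * h)"
proof -
  have e1: "cnj (t * z * p) = inverse t * cnj z * cnj p" using assms by simp
  have e2: "cnj (T * h) = inverse T * cnj h" using assms by simp
  show ?thesis unfolding e1 e2 using assms(2,4,5) by (simp add: field_simps)
qed

lemma alg_a:
  fixes T t z p g :: complex
  assumes "cnj z = inverse z" "z \<noteq> 0" "cnj T = inverse T" "T \<noteq> 0"
  shows "cnj z * cnj (g * cnj T * t * p) * z ^ Suc j = cnj (g * (t * p) * cnj (T * z ^ j))"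
  using assms by (simp add: field_simps)

lemma alg_b:
  fixes T t z p f :: complex
  assumes "cnj T = inverse T" "T \<noteq> 0" "p \<noteq> 0"
  shows "t * p * cnj f / cnj p * z ^ Suc j = cnj (T * cnj (t * z * p) / p * f * cnj (T * z ^ j))"
  using assms by (simp add: field_simps)

lemma alg_w:
  fixes T t z p f g h :: complex
  assumes "cnj z = inverse z" "z \<noteq> 0" "cnj T = inverse T" "T \<noteq> 0" "cnj t = inverse t" "t \<noteq> 0" "p \<noteq> 0"
  shows "g * f * cnj (T * h) = cnj (z * ((cnj z * cnj (g * cnj T * t * p)) * (t * p * cnj f / cnj p) / p) * h)"
  using assms by (simp add: field_simps)

lemma alg_y:
  fixes z a b q p :: complex
  assumes "p \<noteq> 0"
  shows "z * (a * b / p) * (q * p) = z * a * b * q"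
  using assms by (simp add: field_simps)

lemma inner_props:
  assumes "inner_fun \<Theta>"
  shows "\<Theta> \<in> H2" "\<Theta> \<in> L2T" "\<Theta> \<in> LinfT" "AE z in CM. cmod (\<Theta> z) = 1"
  using assms inner_LinfT[OF assms] by (auto simp: inner_fun_def H2_def)

lemma unit_facts: "cmod x = 1 \<Longrightarrow> cnj x = inverse x \<and> x \<noteq> 0"
  using unit_cnj by auto

lemma L2T_power_mult: "u \<in> L2T \<Longrightarrow> (\<lambda>z. z ^ n * u z) \<in> L2T"
proof -
  assume u: "u \<in> L2T"
  show ?thesis
  proof (rule L2T_boundI[where C=1 and f=u, OF u])
    show "AE z in CM. cmod (z ^ n * u z) \<le> 1 * cmod (u z)"
      using AE_CM by eventually_elim (simp add: norm_mult norm_power)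
  qed (use u in auto)
qed

lemma poly_mult_L2T:
  assumes pL: "p \<in> L2T"
  shows "(\<lambda>z. poly q z * p z) \<in> L2T"
proof (rule L2T_boundI[OF pL, where C="\<Sum>i\<le>degree q. cmod (coeff q i)"])
  show "AE z in CM. cmod (poly q z * p z) \<le> (\<Sum>i\<le>degree q. cmod (coeff q i)) * cmod (p z)"
    using AE_CM
  proof eventually_elim
    case (elim z)
    have "cmod (poly q z) \<le> (\<Sum>i\<le>degree q. cmod (coeff q i * z ^ i))"
      unfolding poly_altdef by (rule norm_sum)
    also have "\<dots> = (\<Sum>i\<le>degree q. cmod (coeff q i))"
      using elim by (simp add: norm_mult norm_power)
    finally show ?case by (simp add: norm_mult mult_right_mono)
  qed
qed (use pL in auto)

lemma ker_char:
  assumes T: "inner_fun \<Theta>2" and FL: "(\<lambda>z. g z * f z) \<in> L2T"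
  shows "toeplitz g f \<in> orth (inner_mult_H2 \<Theta>2) \<longleftrightarrow>
         (\<forall>h\<in>H2. inner2 (\<lambda>z. g z * f z) (\<lambda>z. \<Theta>2 z * h z) = 0)"
proof -
  define F where "F = (\<lambda>z. g z * f z)"
  define u where "u = toeplitz g f"
  have FL': "F \<in> L2T" using FL unfolding F_def .
  have u: "u \<in> H2" and orthu: "\<And>e. e \<in> H2 \<Longrightarrow> inner2 (\<lambda>z. F z - u z) e = 0"
    using Pplus_props[OF FL'] unfolding u_def toeplitz_def F_def by auto
  have uL: "u \<in> L2T" using u by (rule H2_L2)
  note TP = inner_props[OF T]
  have TH: "(\<lambda>z. \<Theta>2 z * h z) \<in> H2" if "h \<in> H2" for h
    by (rule bounded_H2_mult[OF TP(1) TP(3) that])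
  have key: "inner2 F (\<lambda>z. \<Theta>2 z * h z) = inner2 u (\<lambda>z. \<Theta>2 z * h z)" if h: "h \<in> H2" for h
  proof -
    have eL: "(\<lambda>z. \<Theta>2 z * h z) \<in> L2T" using TH[OF h] by (rule H2_L2)
    have "inner2 F (\<lambda>z. \<Theta>2 z * h z) - inner2 u (\<lambda>z. \<Theta>2 z * h z) = 0"
      using orthu[OF TH[OF h]] inner2_diff_left[OF FL' uL eL] by simp
    then show ?thesis by simp
  qed
  have mem: "(\<lambda>z. \<Theta>2 z * h z) \<in> inner_mult_H2 \<Theta>2" if h: "h \<in> H2" for h
    unfolding inner_mult_H2_def using H2_L2[OF TH[OF h]] h by auto
  show ?thesis
    unfolding F_def[symmetric] u_def[symmetric]
  proof
    assume "u \<in> orth (inner_mult_H2 \<Theta>2)"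
    then have "\<forall>e\<in>inner_mult_H2 \<Theta>2. inner2 u e = 0" by (simp add: orth_def)
    then show "\<forall>h\<in>H2. inner2 F (\<lambda>z. \<Theta>2 z * h z) = 0"
      using key mem by auto
  next
    assume A: "\<forall>h\<in>H2. inner2 F (\<lambda>z. \<Theta>2 z * h z) = 0"
    have "inner2 u e = 0" if e: "e \<in> inner_mult_H2 \<Theta>2" for e
    proof -
      obtain h where eL: "e \<in> L2T" and h: "h \<in> H2" and ae: "AE z in CM. e z = \<Theta>2 z * h z"
        using e unfolding inner_mult_H2_def by auto
      have "inner2 u e = inner2 u (\<lambda>z. \<Theta>2 z * h z)"
        by (rule inner2_cong_AE[OF uL uL eL H2_L2[OF TH[OF h]]]) (use ae in auto)
      also have "\<dots> = 0" using key[OF h] A h by simp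
      finally show ?thesis .
    qed
    then show "u \<in> orth (inner_mult_H2 \<Theta>2)" using uL by (simp add: orth_def)
  qed
qed

lemma ker_iff:
  assumes T: "inner_fun \<Theta>2" and E1H: "E1 \<subseteq> H2" and g: "g \<in> LinfT"
  shows "f \<in> gen_toeplitz_kernel g E1 (inner_mult_H2 \<Theta>2) \<longleftrightarrow>
         f \<in> E1 \<and> (\<forall>h\<in>H2. inner2 (\<lambda>z. g z * f z) (\<lambda>z. \<Theta>2 z * h z) = 0)"
proof (cases "f \<in> E1")
  case True
  then have "f \<in> L2T" using E1H H2_L2 by auto
  then show ?thesis using ker_char[OF T LinfT_mult[OF g]] True
    unfolding gen_toeplitz_kernel_def by auto
qed (simp add: gen_toeplitz_kernel_def)

theorem mainTheorem1:
  fixes E1 :: "(complex \<Rightarrow> complex) set"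
    and \<Theta>2 \<theta> p k :: "complex \<Rightarrow> complex"
  assumes "closed_subspace_L2 E1" and "E1 \<subseteq> H2"
    and "inner_fun \<Theta>2"
    and "k \<in> E1" and "\<not> (AE z in circle_measure. k z = 0)"
    and "inner_fun \<theta>" and "outer_fun p"
    and "AE z in circle_measure. k z = \<theta> z * p z"
  shows "is_min_gen_toeplitz_kernel E1 (inner_mult_H2 \<Theta>2) k
           (gen_toeplitz_kernel (\<lambda>z. \<Theta>2 z * cnj (\<theta> z * z * p z) / p z) E1 (inner_mult_H2 \<Theta>2))"
proof -
  note E1H = assms(2) and T = assms(3) and kE = assms(4) and th = assms(6) and outer = assms(7) and kfac = assms(8)
  define g0 where "g0 = (\<lambda>z. \<Theta>2 z * cnj (\<theta> z * z * p z) / p z)"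
  note TP = inner_props[OF T]
  note thP = inner_props[OF th]
  have pH: "p \<in> H2" using outer by (simp add: outer_fun_def)
  have pL: "p \<in> L2T" using pH by (rule H2_L2)
  have kL: "k \<in> L2T" using kE E1H H2_L2 by auto
  have [measurable]: "p \<in> borel_measurable borel" "k \<in> borel_measurable borel"
    "\<Theta>2 \<in> borel_measurable borel" "\<theta> \<in> borel_measurable borel"
    using pL kL TP(2) thP(2) by auto
  have p0: "AE z in CM. p z \<noteq> 0" by (rule outer_nonzero[OF outer])
  have AEall: "AE z in CM. cnj z = inverse z \<and> z \<noteq> 0 \<and> cnj (\<Theta>2 z) = inverse (\<Theta>2 z) \<and> \<Theta>2 z \<noteq> 0 \<and>
      cnj (\<theta> z) = inverse (\<theta> z) \<and> \<theta> z \<noteq> 0 \<and> p z \<noteq> 0 \<and> k z = \<theta> z * p z \<and> cmod z = 1 \<and>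
      cmod (\<Theta>2 z) = 1 \<and> cmod (\<theta> z) = 1"
    using AE_CM TP(4) thP(4) p0 kfac by eventually_elim (auto dest: unit_facts)
  have g0L: "g0 \<in> LinfT"
  proof -
    have "g0 \<in> borel_measurable borel" unfolding g0_def by measurable
    moreover have "AE z in CM. cmod (g0 z) \<le> 1"
      using AEall by eventually_elim (auto simp: g0_def norm_mult norm_divide norm_inverse)
    ultimately show ?thesis unfolding LinfT_def by auto
  qed
  have Kiff: "f \<in> gen_toeplitz_kernel g E1 (inner_mult_H2 \<Theta>2) \<longleftrightarrow>
      f \<in> E1 \<and> (\<forall>h\<in>H2. inner2 (\<lambda>z. g z * f z) (\<lambda>z. \<Theta>2 z * h z) = 0)" if "g \<in> LinfT" for g f
    by (rule ker_iff[OF T E1H that])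
  have kK: "k \<in> gen_toeplitz_kernel g0 E1 (inner_mult_H2 \<Theta>2)"
    unfolding Kiff[OF g0L]
  proof (intro conjI kE ballI)
    fix h assume h: "h \<in> H2"
    have [measurable]: "h \<in> borel_measurable borel" using H2_L2[OF h] by auto
    have "AE z in CM. g0 z * k z * cnj (\<Theta>2 z * h z) = cnj (z * p z * h z)"
      using AEall
    proof eventually_elim
      case (elim z)
      then have kz: "k z = \<theta> z * p z" by blast
      show ?case unfolding g0_def kz by (rule alg_k) (use elim in auto)
    qed
    then have "inner2 (\<lambda>z. g0 z * k z) (\<lambda>z. \<Theta>2 z * h z) = integral\<^sup>L CM (\<lambda>z. cnj (z * p z * h z))"
      unfolding inner2_def by (rule integral_cong_AE[rotated 2]) (auto simp: g0_def)
    also have "\<dots> = cnj (integral\<^sup>L CM (\<lambda>z. z ^ 1 * p z * h z))"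
      by (simp only: Bochner_Integration.integral_cnj power_one_right)
    also have "\<dots> = 0" using H2_prod[OF pH h, of 1] by simp
    finally show "inner2 (\<lambda>z. g0 z * k z) (\<lambda>z. \<Theta>2 z * h z) = 0" .
  qed
  have minimal: "gen_toeplitz_kernel g0 E1 (inner_mult_H2 \<Theta>2) \<subseteq> gen_toeplitz_kernel g' E1 (inner_mult_H2 \<Theta>2)"
    if g': "g' \<in> LinfT" and kg': "k \<in> gen_toeplitz_kernel g' E1 (inner_mult_H2 \<Theta>2)" for g'
  proof
    fix f assume fK: "f \<in> gen_toeplitz_kernel g0 E1 (inner_mult_H2 \<Theta>2)"
    from fK have fE: "f \<in> E1" and A0: "\<forall>h\<in>H2. inner2 (\<lambda>z. g0 z * f z) (\<lambda>z. \<Theta>2 z * h z) = 0"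
      using Kiff[OF g0L] by auto
    from kg' have Ak: "\<forall>h\<in>H2. inner2 (\<lambda>z. g' z * k z) (\<lambda>z. \<Theta>2 z * h z) = 0"
      using Kiff[OF g'] by auto
    have fL: "f \<in> L2T" using fE E1H H2_L2 by auto
    have [measurable]: "f \<in> borel_measurable borel" using fL by auto
    obtain C where C: "AE z in CM. cmod (g' z) \<le> C" using g' by (auto simp: LinfT_def)
    have [measurable]: "g' \<in> borel_measurable borel" using g' by (auto simp: LinfT_def)
    define a where "a = (\<lambda>z. cnj z * cnj (g' z * cnj (\<Theta>2 z) * \<theta> z * p z))"
    define b where "b = (\<lambda>z. \<theta> z * p z * cnj (f z) / cnj (p z))"
    define w where "w = (\<lambda>z. a z * b z / p z)"
    have am[measurable]: "a \<in> borel_measurable borel" unfolding a_def by measurable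
    have bm[measurable]: "b \<in> borel_measurable borel" unfolding b_def by measurable
    have wm[measurable]: "w \<in> borel_measurable borel" unfolding w_def by measurable
    have aL: "a \<in> L2T"
    proof (rule L2T_boundI[where C=C and f=p, OF pL am])
      show "AE z in CM. cmod (a z) \<le> C * cmod (p z)"
        using AEall C
      proof eventually_elim
        case (elim z)
        then have "cmod (a z) = cmod (g' z) * cmod (p z)"
          unfolding a_def by (simp add: norm_mult norm_inverse)
        then show ?case using elim by (simp add: mult_right_mono)
      qed
    qed
    have bL: "b \<in> L2T"
    proof (rule L2T_boundI[where C=1 and f=f, OF fL bm])
      show "AE z in CM. cmod (b z) \<le> 1 * cmod (f z)"
        using AEall
      proof eventually_elim
        case (elim z)
        then show ?case unfolding b_def by (simp add: norm_mult norm_divide)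
      qed
    qed
    have wL: "w \<in> L2T"
    proof (rule L2T_boundI[where C=C and f=f, OF fL wm])
      show "AE z in CM. cmod (w z) \<le> C * cmod (f z)"
        using AEall C
      proof eventually_elim
        case (elim z)
        then have "cmod (w z) = cmod (g' z) * cmod (f z)"
          unfolding w_def a_def b_def by (simp add: norm_mult norm_divide norm_inverse)
        then show ?case using elim by (simp add: mult_right_mono)
      qed
    qed
    have zp: "z powi (- n) = z ^ Suc j" if "nat (- n) = Suc j" "n < 0" for z :: complex and n j
      using that by (simp add: power_int_def)
    have aH: "a \<in> H2"
    proof -
      have "fourier_coeff a n = 0" if n: "n < 0" for n
      proof -
        have "nat (- n) > 0" using n by simp
        then obtain j where j: "nat (- n) = Suc j" using gr0_conv_Suc by blast
        have "AE z in CM. a z * z powi (- n) = cnj (g' z * k z * cnj (\<Theta>2 z * z ^ j))"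
          using AEall
        proof eventually_elim
          case (elim z)
          then have kz: "k z = \<theta> z * p z" by blast
          show ?case unfolding a_def kz zp[OF j n] by (rule alg_a) (use elim in auto)
        qed
        then have "fourier_coeff a n = integral\<^sup>L CM (\<lambda>z. cnj (g' z * k z * cnj (\<Theta>2 z * z ^ j)))"
          unfolding fourier_coeff_def by (rule integral_cong_AE[rotated 2]) (auto simp del: power_int_minus)
        also have "\<dots> = cnj (inner2 (\<lambda>z. g' z * k z) (\<lambda>z. \<Theta>2 z * z ^ j))"
          unfolding inner2_def by (rule Bochner_Integration.integral_cnj)
        also have "\<dots> = 0" using Ak power_H2[of j] by simp
        finally show ?thesis .
      qed
      with aL show ?thesis by (simp add: H2_def)
    qed
    have bH: "b \<in> H2"
    proof -
      have "fourier_coeff b n = 0" if n: "n < 0" for n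
      proof -
        have "nat (- n) > 0" using n by simp
        then obtain j where j: "nat (- n) = Suc j" using gr0_conv_Suc by blast
        have "AE z in CM. b z * z powi (- n) = cnj (g0 z * f z * cnj (\<Theta>2 z * z ^ j))"
          using AEall
        proof eventually_elim
          case (elim z)
          show ?case unfolding b_def g0_def zp[OF j n] by (rule alg_b) (use elim in auto)
        qed
        then have "fourier_coeff b n = integral\<^sup>L CM (\<lambda>z. cnj (g0 z * f z * cnj (\<Theta>2 z * z ^ j)))"
          unfolding fourier_coeff_def by (rule integral_cong_AE[rotated 2]) (auto simp: g0_def simp del: power_int_minus)
        also have "\<dots> = cnj (inner2 (\<lambda>z. g0 z * f z) (\<lambda>z. \<Theta>2 z * z ^ j))"
          unfolding inner2_def by (rule Bochner_Integration.integral_cnj)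
        also have "\<dots> = 0" using A0 power_H2[of j] by simp
        finally show ?thesis .
      qed
      with bL show ?thesis by (simp add: H2_def)
    qed
    have intab: "integrable CM (\<lambda>z. z ^ n * a z * b z)" for n
      using L2T_prod_int[OF L2T_power_mult[OF aL] bL] by simp
    have wid: "AE z in CM. g' z * f z * cnj (\<Theta>2 z * h z) = cnj (z * w z * h z)" for h
      using AEall
    proof eventually_elim
      case (elim z)
      show ?case unfolding w_def a_def b_def by (rule alg_w) (use elim in auto)
    qed
    have yid: "AE z in CM. z * w z * (poly q z * p z) = (\<Sum>i\<le>degree q. coeff q i * (z ^ Suc i * a z * b z))" for q
      using AEall
    proof eventually_elim
      case (elim z)
      have "z * w z * (poly q z * p z) = z * a z * b z * poly q z"
        unfolding w_def by (rule alg_y) (use elim in auto)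
      also have "\<dots> = (\<Sum>i\<le>degree q. coeff q i * (z ^ Suc i * a z * b z))"
        unfolding poly_altdef by (simp add: sum_distrib_left mult_ac)
      finally show ?case .
    qed
    show "f \<in> gen_toeplitz_kernel g' E1 (inner_mult_H2 \<Theta>2)"
      unfolding Kiff[OF g']
    proof (intro conjI fE ballI)
      fix h assume h: "h \<in> H2"
      have hL: "h \<in> L2T" using h by (rule H2_L2)
      have [measurable]: "h \<in> borel_measurable borel" using hL by auto
      define X where "X = integral\<^sup>L CM (\<lambda>z. z * w z * h z)"
      have zwL: "(\<lambda>z. z * w z) \<in> L2T" by (rule L2T_z_mult[OF wL])
      have Xi: "X = inner2 (\<lambda>z. z * w z) (\<lambda>z. cnj (h z))" unfolding X_def inner2_def by simp
      have "cmod X \<le> e * norm2 w" if e: "e > 0" for e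
      proof -
        obtain q where q: "norm2 (\<lambda>z. poly q z * p z - h z) < e"
          using outer h e unfolding outer_fun_def by blast
        have qpL: "(\<lambda>z. poly q z * p z) \<in> L2T" by (rule poly_mult_L2T[OF pL])
        have Y: "inner2 (\<lambda>z. z * w z) (\<lambda>z. cnj (poly q z * p z)) = 0"
        proof -
          have "inner2 (\<lambda>z. z * w z) (\<lambda>z. cnj (poly q z * p z)) = integral\<^sup>L CM (\<lambda>z. z * w z * (poly q z * p z))"
            unfolding inner2_def by simp
          also have "\<dots> = integral\<^sup>L CM (\<lambda>z. \<Sum>i\<le>degree q. coeff q i * (z ^ Suc i * a z * b z))"
            by (rule integral_cong_AE[rotated 2, OF yid]) auto
          also have "\<dots> = (\<Sum>i\<le>degree q. coeff q i * integral\<^sup>L CM (\<lambda>z. z ^ Suc i * a z * b z))"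
            by (subst Bochner_Integration.integral_sum) (use intab in \<open>auto simp del: power_Suc\<close>)
          also have "\<dots> = 0"
            by (intro sum.neutral ballI) (simp add: H2_prod[OF aH bH] del: power_Suc)
          finally show ?thesis .
        qed
        have hc: "(\<lambda>z. cnj (h z)) \<in> L2T" using hL by simp
        have qc: "(\<lambda>z. cnj (poly q z * p z)) \<in> L2T" by (subst L2T_cnj) (rule qpL)
        have "cmod X = cmod (inner2 (\<lambda>z. z * w z) (\<lambda>z. cnj (h z)) - inner2 (\<lambda>z. z * w z) (\<lambda>z. cnj (poly q z * p z)))"
          using Xi Y by simp
        also have "\<dots> = cmod (inner2 (\<lambda>z. cnj (h z)) (\<lambda>z. z * w z) - inner2 (\<lambda>z. cnj (poly q z * p z)) (\<lambda>z. z * w z))"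
        proof -
          have "inner2 (\<lambda>z. z * w z) (\<lambda>z. cnj (h z)) - inner2 (\<lambda>z. z * w z) (\<lambda>z. cnj (poly q z * p z))
              = cnj (inner2 (\<lambda>z. cnj (h z)) (\<lambda>z. z * w z) - inner2 (\<lambda>z. cnj (poly q z * p z)) (\<lambda>z. z * w z))"
            by (simp add: inner2_sym[of "\<lambda>z. z * w z"])
          then show ?thesis by (simp only: complex_mod_cnj)
        qed
        also have "\<dots> \<le> norm2 (\<lambda>z. cnj (h z) - cnj (poly q z * p z)) * norm2 (\<lambda>z. z * w z)"
          by (rule inner2_cont[OF hc qc zwL])
        also have "norm2 (\<lambda>z. cnj (h z) - cnj (poly q z * p z)) = norm2 (\<lambda>z. poly q z * p z - h z)"
          using cnj_L2T_diff[of h "\<lambda>z. poly q z * p z"] norm2_minus_commute[of h "\<lambda>z. poly q z * p z"] by simp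
        also have "norm2 (\<lambda>z. z * w z) = norm2 w" by (rule norm2_z_mult[OF wL])
        also have "norm2 (\<lambda>z. poly q z * p z - h z) * norm2 w \<le> e * norm2 w"
          using q by (intro mult_right_mono) auto
        finally show ?thesis .
      qed
      then have X0: "X = 0" by (intro eps_zero[of "norm2 w"]) auto
      have "inner2 (\<lambda>z. g' z * f z) (\<lambda>z. \<Theta>2 z * h z) = integral\<^sup>L CM (\<lambda>z. cnj (z * w z * h z))"
        unfolding inner2_def by (rule integral_cong_AE[rotated 2, OF wid]) auto
      also have "\<dots> = cnj X" unfolding X_def by (rule Bochner_Integration.integral_cnj)
      finally show "inner2 (\<lambda>z. g' z * f z) (\<lambda>z. \<Theta>2 z * h z) = 0" using X0 by simp
    qed
  qed
  show ?thesis
    unfolding is_min_gen_toeplitz_kernel_def g0_def[symmetric]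
    using g0L kK minimal by blast
qed

end
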